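(* Let $M$ be an adequate monoid, $\chi:\Sigma\to M$ a function and $\rho$ the map defined below. For every $\Sigma$-tree $X$, $\rho(X)=\rho(\overline{X})$, where $\overline{X}$ is (any representative of) the pruning of $X$.
   Context: Adequate monoid: a monoid $M$ whose idempotents commute and in which every $\mathcal{L}^*$-class and every $\mathcal{R}^*$-class contains an idempotent, where $a\,\mathcal{L}^*\,b$ iff ($ax=ay\Leftrightarrow bx=by$ for all $x,y\in M$) and $a\,\mathcal{R}^*\,b$ iff ($xa=ya\Leftrightarrow xb=yb$ for all $x,y\in M$); $x^+$ and $x^*$ denote the unique idempotents $\mathcal{R}^*$- and $\mathcal{L}^*$-related to $x$. Trees: a $\Sigma$-tree is a finite directed graph whose underlying undirected graph is a tree, each edge $e$ having initial vertex $\alpha(e)$, terminal vertex $\omega(e)$ and label $\lambda(e)\in\Sigma$, with distinguished start and end vertices such that there is a (possibly empty) directed path (the trunk) from start to end vertex; idempotent if start equals end vertex. A morphism $X\to Y$ maps vertices to vertices and edges to edges preserving $\alpha,\omega,\lambda$ and start/end vertices; isomorphisms are bijective morphisms. A retraction is an idempotent morphism $X\to X$, its image a retract; $X$ is pruned if it has no non-identity retraction. Every tree has a pruned retract, unique up to isomorphism; its isomorphism type is $\overline{X}$. $\tau$ (on idempotent trees, values idempotents of $M$) is defined recursively: $\tau(X)=1$ if $X$ has no edges; otherwise with $v$ the start (= end) vertex, for each edge $e$ with $\alpha(e)=v$ let $X_e$ be the component of $X$ minus $e$ containing $\omega(e)$, as an idempotent tree at $\omega(e)$, and for each edge $e$ with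 $\omega(e)=v$ let $X_e$ be the component of $X$ minus $e$ containing $\alpha(e)$, as an idempotent tree at $\alpha(e)$; then $\tau(X)=\prod_{e:\alpha(e)=v}[\chi(\lambda(e))\tau(X_e)]^+\cdot\prod_{e:\omega(e)=v}[\tau(X_e)\chi(\lambda(e))]^*$ (commuting idempotents, order irrelevant). For any tree $X$ with trunk vertices $v_0,\dots,v_n$ in order and $a_i$ the label of the trunk edge from $v_{i-1}$ to $v_i$, let $X_i$ be the component containing $v_i$ of $X$ with all trunk edges removed, as an idempotent tree at $v_i$; $\rho(X)=\tau(X_0)\chi(a_1)\tau(X_1)\cdots\chi(a_n)\tau(X_n)$. Both depend only on isomorphism type. *)

theory Defs
  imports Main
begin

definition idem :: "'m::monoid_mult \<Rightarrow> bool" where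
  "idem e \<longleftrightarrow> e * e = e"

definition Lstar :: "'m::monoid_mult \<Rightarrow> 'm \<Rightarrow> bool" where
  "Lstar a b \<longleftrightarrow> (\<forall>x y. a * x = a * y \<longleftrightarrow> b * x = b * y)"

definition Rstar :: "'m::monoid_mult \<Rightarrow> 'm \<Rightarrow> bool" where
  "Rstar a b \<longleftrightarrow> (\<forall>x y. x * a = y * a \<longleftrightarrow> x * b = y * b)"

definition adequate :: "'m::monoid_mult itself \<Rightarrow> bool" where
  "adequate (_ :: 'm itself) \<longleftrightarrow>
     (\<forall>e f :: 'm. idem e \<and> idem f \<longrightarrow> e * f = f * e) \<and>
     (\<forall>a :: 'm. \<exists>e. idem e \<and> Lstar a e) \<and>
     (\<forall>a :: 'm. \<exists>e. idem e \<and> Rstar a e)"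

text \<open>x^+ : the unique idempotent R*-related to x; x^* : the unique idempotent L*-related to x.\<close>
definition dplus :: "'m::monoid_mult \<Rightarrow> 'm" where
  "dplus x = (THE e. idem e \<and> Rstar x e)"

definition dstar :: "'m::monoid_mult \<Rightarrow> 'm" where
  "dstar x = (THE e. idem e \<and> Lstar x e)"

text \<open>Product of a finite family (of commuting idempotents) in some enumeration order;
  the order is irrelevant for commuting factors.\<close>
definition setprod :: "('a \<Rightarrow> 'm::monoid_mult) \<Rightarrow> 'a set \<Rightarrow> 'm" where
  "setprod f S = foldr (\<lambda>a acc. f a * acc) (SOME xs. distinct xs \<and> set xs = S) 1"

record ('v, 'e, 's) dtree =
  verts :: "'v set"
  edges :: "'e set"
  src   :: "'e \<Rightarrow> 'v"
  tgt   :: "'e \<Rightarrow> 'v"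
  lab   :: "'e \<Rightarrow> 's"
  st    :: 'v
  en    :: 'v

definition uadj :: "('v, 'e, 's) dtree \<Rightarrow> 'e set \<Rightarrow> ('v \<times> 'v) set" where
  "uadj X F = {(u, w). \<exists>e \<in> F. (src X e = u \<and> tgt X e = w) \<or> (src X e = w \<and> tgt X e = u)}"

fun dpath :: "('v, 'e, 's) dtree \<Rightarrow> 'v \<Rightarrow> 'e list \<Rightarrow> 'v \<Rightarrow> bool" where
  "dpath X u [] w \<longleftrightarrow> u = w"
| "dpath X u (e # es) w \<longleftrightarrow> e \<in> edges X \<and> src X e = u \<and> dpath X (tgt X e) es w"

definition is_trunk :: "('v, 'e, 's) dtree \<Rightarrow> 'e list \<Rightarrow> bool" where
  "is_trunk X es \<longleftrightarrow> distinct es \<and> dpath X (st X) es (en X)"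

text \<open>A Sigma-tree: finite directed graph whose underlying undirected graph is a tree
  (connected, and every edge is a bridge, i.e. acyclic), with a directed trunk path
  from the start to the end vertex.\<close>
definition is_tree :: "('v, 'e, 's) dtree \<Rightarrow> bool" where
  "is_tree X \<longleftrightarrow>
     finite (verts X) \<and> finite (edges X) \<and>
     (\<forall>e \<in> edges X. src X e \<in> verts X \<and> tgt X e \<in> verts X) \<and>
     st X \<in> verts X \<and> en X \<in> verts X \<and>
     (\<forall>u \<in> verts X. \<forall>w \<in> verts X. (u, w) \<in> (uadj X (edges X))\<^sup>*) \<and>
     (\<forall>e \<in> edges X. (src X e, tgt X e) \<notin> (uadj X (edges X - {e}))\<^sup>*) \<and>
     (\<exists>es. is_trunk X es)"

definition morphism :: "('v, 'e, 's) dtree \<Rightarrow> ('w, 'f, 's) dtree \<Rightarrow> ('v \<Rightarrow> 'w) \<Rightarrow> ('e \<Rightarrow> 'f) \<Rightarrow> bool" where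
  "morphism X Y fV fE \<longleftrightarrow>
     (\<forall>v \<in> verts X. fV v \<in> verts Y) \<and>
     (\<forall>e \<in> edges X. fE e \<in> edges Y \<and> src Y (fE e) = fV (src X e) \<and>
                     tgt Y (fE e) = fV (tgt X e) \<and> lab Y (fE e) = lab X e) \<and>
     fV (st X) = st Y \<and> fV (en X) = en Y"

definition isomorphism :: "('v, 'e, 's) dtree \<Rightarrow> ('w, 'f, 's) dtree \<Rightarrow> ('v \<Rightarrow> 'w) \<Rightarrow> ('e \<Rightarrow> 'f) \<Rightarrow> bool" where
  "isomorphism X Y fV fE \<longleftrightarrow> morphism X Y fV fE \<and>
     bij_betw fV (verts X) (verts Y) \<and> bij_betw fE (edges X) (edges Y)"

definition retraction :: "('v, 'e, 's) dtree \<Rightarrow> ('v \<Rightarrow> 'v) \<Rightarrow> ('e \<Rightarrow> 'e) \<Rightarrow> bool" where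
  "retraction X fV fE \<longleftrightarrow> morphism X X fV fE \<and>
     (\<forall>v \<in> verts X. fV (fV v) = fV v) \<and> (\<forall>e \<in> edges X. fE (fE e) = fE e)"

definition retract_img :: "('v, 'e, 's) dtree \<Rightarrow> ('v \<Rightarrow> 'v) \<Rightarrow> ('e \<Rightarrow> 'e) \<Rightarrow> ('v, 'e, 's) dtree" where
  "retract_img X fV fE = X\<lparr>verts := fV ` verts X, edges := fE ` edges X\<rparr>"

definition pruned :: "('v, 'e, 's) dtree \<Rightarrow> bool" where
  "pruned X \<longleftrightarrow> (\<forall>fV fE. retraction X fV fE \<longrightarrow>
      (\<forall>v \<in> verts X. fV v = v) \<and> (\<forall>e \<in> edges X. fE e = e))"

text \<open>tau_aux n chi X v F computes tau of the idempotent tree at v formed by the component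
  of v in X with the edges F removed (F contains the edge(s) leading back towards the parent);
  in recursive calls the subtree X_e at the far end of edge e is the component of X - e.
  The fuel n is the number of edges, which bounds the depth, so it never runs out.\<close>
primrec tau_aux :: "nat \<Rightarrow> ('s \<Rightarrow> 'm::monoid_mult) \<Rightarrow> ('v, 'e, 's) dtree \<Rightarrow> 'v \<Rightarrow> 'e set \<Rightarrow> 'm" where
  "tau_aux 0 chi X v F = 1"
| "tau_aux (Suc n) chi X v F =
     setprod (\<lambda>e. dplus (chi (lab X e) * tau_aux n chi X (tgt X e) {e}))
             {e \<in> edges X. src X e = v \<and> e \<notin> F} *
     setprod (\<lambda>e. dstar (tau_aux n chi X (src X e) {e} * chi (lab X e)))
             {e \<in> edges X. tgt X e = v \<and> e \<notin> F}"

text \<open>tau of an idempotent tree (start = end vertex).\<close>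
definition tau :: "('s \<Rightarrow> 'm::monoid_mult) \<Rightarrow> ('v, 'e, 's) dtree \<Rightarrow> 'm" where
  "tau chi X = tau_aux (card (edges X)) chi X (st X) {}"

definition trunk :: "('v, 'e, 's) dtree \<Rightarrow> 'e list" where
  "trunk X = (SOME es. is_trunk X es)"

text \<open>rho(X) = tau(X_0) chi(a_1) tau(X_1) ... chi(a_n) tau(X_n), where X_i is the component
  of v_i in X with all trunk edges removed.\<close>
definition rho :: "('s \<Rightarrow> 'm::monoid_mult) \<Rightarrow> ('v, 'e, 's) dtree \<Rightarrow> 'm" where
  "rho chi X =
     (let es = trunk X;
          T = (\<lambda>v. tau_aux (card (edges X)) chi X v (set es))
      in T (st X) * foldr (\<lambda>e acc. chi (lab X e) * T (tgt X e) * acc) es 1)"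

end

theory Submission
  imports Defs
begin


lemma adq_comm: "adequate TYPE('m::monoid_mult) \<Longrightarrow> idem (e::'m) \<Longrightarrow> idem f \<Longrightarrow> e*f = f*e"
  unfolding adequate_def by blast

lemma Rstar_trans: "Rstar a b \<Longrightarrow> Rstar b c \<Longrightarrow> Rstar a c" unfolding Rstar_def by blast
lemma Rstar_sym: "Rstar a b \<Longrightarrow> Rstar b a" unfolding Rstar_def by blast
lemma Lstar_trans: "Lstar a b \<Longrightarrow> Lstar b c \<Longrightarrow> Lstar a c" unfolding Lstar_def by blast
lemma Lstar_sym: "Lstar a b \<Longrightarrow> Lstar b a" unfolding Lstar_def by blast

lemma R_idem_uniq:
  assumes A: "adequate TYPE('m::monoid_mult)" and "idem (e::'m)" "idem f" "Rstar e f"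
  shows "e = f"
proof -
  have "f * f = 1 * f" using assms(3) by (simp add: idem_def)
  hence "f * e = 1 * e" using assms(4) unfolding Rstar_def by blast
  moreover have "e * e = 1 * e" using assms(2) by (simp add: idem_def)
  hence "e * f = 1 * f" using assms(4) unfolding Rstar_def by blast
  ultimately show ?thesis using adq_comm[OF A assms(2,3)] by simp
qed

lemma L_idem_uniq:
  assumes A: "adequate TYPE('m::monoid_mult)" and "idem (e::'m)" "idem f" "Lstar e f"
  shows "e = f"
proof -
  have "f * f = f * 1" using assms(3) by (simp add: idem_def)
  hence "e * f = e * 1" using assms(4) unfolding Lstar_def by blast
  moreover have "e * e = e * 1" using assms(2) by (simp add: idem_def)
  hence "f * e = f * 1" using assms(4) unfolding Lstar_def by blast
  ultimately show ?thesis using adq_comm[OF A assms(2,3)] by simp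
qed

lemma dplus_prop:
  assumes A: "adequate TYPE('m::monoid_mult)"
  shows "idem (dplus (x::'m)) \<and> Rstar x (dplus x)"
proof -
  obtain e :: 'm where e: "idem e" "Rstar x e" using A unfolding adequate_def by blast
  have "\<exists>!e. idem e \<and> Rstar x e"
    using e R_idem_uniq[OF A] Rstar_trans Rstar_sym by (metis)
  thus ?thesis unfolding dplus_def by (rule theI')
qed

lemma dstar_prop:
  assumes A: "adequate TYPE('m::monoid_mult)"
  shows "idem (dstar (x::'m)) \<and> Lstar x (dstar x)"
proof -
  obtain e :: 'm where e: "idem e" "Lstar x e" using A unfolding adequate_def by blast
  have "\<exists>!e. idem e \<and> Lstar x e"
    using e L_idem_uniq[OF A] Lstar_trans Lstar_sym by (metis)
  thus ?thesis unfolding dstar_def by (rule theI')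
qed

lemma dplus_eq:
  assumes A: "adequate TYPE('m::monoid_mult)" and "idem (e::'m)" "Rstar x e"
  shows "dplus x = e"
  using R_idem_uniq[OF A] dplus_prop[OF A] assms Rstar_trans Rstar_sym by metis

lemma dstar_eq:
  assumes A: "adequate TYPE('m::monoid_mult)" and "idem (e::'m)" "Lstar x e"
  shows "dstar x = e"
  using L_idem_uniq[OF A] dstar_prop[OF A] assms Lstar_trans Lstar_sym by metis

lemma dplus_idem: "adequate TYPE('m::monoid_mult) \<Longrightarrow> idem (dplus (x::'m))"
  using dplus_prop by blast
lemma dstar_idem: "adequate TYPE('m::monoid_mult) \<Longrightarrow> idem (dstar (x::'m))"
  using dstar_prop by blast

lemma dplus_left: assumes A: "adequate TYPE('m::monoid_mult)" shows "dplus (x::'m) * x = x"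
proof -
  have "Rstar x (dplus x)" "idem (dplus x)" using dplus_prop[OF A] by auto
  thus ?thesis unfolding Rstar_def idem_def by (metis mult_1)
qed

lemma dstar_right: assumes A: "adequate TYPE('m::monoid_mult)" shows "(x::'m) * dstar x = x"
proof -
  have "Lstar x (dstar x)" "idem (dstar x)" using dstar_prop[OF A] by auto
  thus ?thesis unfolding Lstar_def idem_def by (metis mult_1_right)
qed

lemma idem_mult: "adequate TYPE('m::monoid_mult) \<Longrightarrow> idem (e::'m) \<Longrightarrow> idem f \<Longrightarrow> idem (e*f)"
  unfolding idem_def using adq_comm[unfolded idem_def]
  by (metis mult.assoc)

lemma dplus_idem_mult:
  assumes A: "adequate TYPE('m::monoid_mult)" and e: "idem (e::'m)"
  shows "dplus (e * x) = e * dplus x"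
proof (rule dplus_eq[OF A])
  show "idem (e * dplus x)" using idem_mult[OF A e dplus_idem[OF A]] .
  have "Rstar x (dplus x)" using dplus_prop[OF A] by blast
  then show "Rstar (e * x) (e * dplus x)" unfolding Rstar_def by (simp add: mult.assoc[symmetric])
qed

lemma dstar_idem_mult:
  assumes A: "adequate TYPE('m::monoid_mult)" and e: "idem (e::'m)"
  shows "dstar (x * e) = dstar x * e"
proof (rule dstar_eq[OF A])
  show "idem (dstar x * e)" using idem_mult[OF A dstar_idem[OF A] e] .
  have "Lstar x (dstar x)" using dstar_prop[OF A] by blast
  then show "Lstar (x * e) (dstar x * e)" unfolding Lstar_def by (simp add: mult.assoc)
qed

lemma dplus_self: "adequate TYPE('m::monoid_mult) \<Longrightarrow> idem (e::'m) \<Longrightarrow> dplus e = e"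
  by (rule dplus_eq) (auto simp: Rstar_def)
lemma dstar_self: "adequate TYPE('m::monoid_mult) \<Longrightarrow> idem (e::'m) \<Longrightarrow> dstar e = e"
  by (rule dstar_eq) (auto simp: Lstar_def)

lemma dplus_mono:
  assumes A: "adequate TYPE('m::monoid_mult)"
  shows "dplus (y::'m) * dplus (y * z) = dplus (y * z)"
proof -
  have "dplus (y*z) = dplus (dplus y * (y * z))" using dplus_left[OF A, of y] by (simp add: mult.assoc[symmetric])
  also have "\<dots> = dplus y * dplus (y*z)" by (rule dplus_idem_mult[OF A dplus_idem[OF A]])
  finally show ?thesis by simp
qed

lemma dstar_mono:
  assumes A: "adequate TYPE('m::monoid_mult)"
  shows "dstar (z * y) * dstar (y::'m) = dstar (z * y)"
proof -
  have "dstar (z*y) = dstar ((z * y) * dstar y)" using dstar_right[OF A, of y] by (simp add: mult.assoc)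
  also have "\<dots> = dstar (z*y) * dstar y" by (rule dstar_idem_mult[OF A dstar_idem[OF A]])
  finally show ?thesis by simp
qed




definition fprod :: "('a \<Rightarrow> 'm::monoid_mult) \<Rightarrow> 'a list \<Rightarrow> 'm" where
  "fprod f xs = foldr (\<lambda>a acc. f a * acc) xs 1"

lemma fprod_simps[simp]: "fprod f [] = 1" "fprod f (a # xs) = f a * fprod f xs"
  by (simp_all add: fprod_def)
lemma fprod_append: "fprod f (xs @ ys) = fprod f xs * fprod f ys"
  by (induction xs) (simp_all add: mult.assoc)

lemma setprod_list: "finite S \<Longrightarrow> \<exists>xs. distinct xs \<and> set xs = S \<and> setprod f S = fprod f xs"
proof -
  assume "finite S"
  then have "\<exists>xs. distinct xs \<and> set xs = S" using finite_distinct_list by blast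
  then have "distinct (SOME xs. distinct xs \<and> set xs = S) \<and> set (SOME xs. distinct xs \<and> set xs = S) = S"
    by (rule someI_ex)
  thus ?thesis unfolding setprod_def fprod_def by blast
qed

lemma fprod_comm:
  assumes "\<forall>b\<in>set l. f a * f b = f b * f a"
  shows "f a * fprod f l = fprod f l * f a"
  using assms
proof (induction l)
  case (Cons b l)
  then have h: "f a * f b = f b * f a" "f a * fprod f l = fprod f l * f a" by auto
  have "f a * fprod f (b # l) = (f a * f b) * fprod f l" by (simp add: mult.assoc)
  also have "\<dots> = f b * (f a * fprod f l)" by (simp add: h(1) mult.assoc)
  also have "\<dots> = fprod f (b # l) * f a" by (simp add: h(2) mult.assoc)
  finally show ?case .
qed simp

lemma fprod_perm:
  assumes "distinct xs" "distinct ys" "set xs = set ys"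
    and C: "\<forall>a\<in>set xs. \<forall>b\<in>set xs. f a * f b = f b * f a"
  shows "fprod f xs = fprod f ys"
  using assms
proof (induction xs arbitrary: ys)
  case Nil then show ?case by simp
next
  case (Cons a xs)
  have "a \<in> set ys" using Cons.prems(3) by (metis list.set_intros(1))
  then obtain ys1 ys2 where ys: "ys = ys1 @ a # ys2" by (meson split_list)
  have d: "distinct (ys1 @ ys2)" "a \<notin> set ys1" "a \<notin> set ys2"
    using Cons.prems(2) ys by auto
  have s: "set xs = set (ys1 @ ys2)"
  proof -
    have h1: "insert a (set xs) = insert a (set (ys1 @ ys2))" using Cons.prems(3) ys by auto
    have h2: "a \<notin> set xs" using Cons.prems(1) by simp
    have h3: "a \<notin> set (ys1 @ ys2)" using d by simp
    show ?thesis
    proof (intro equalityI subsetI)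
      fix x assume x: "x \<in> set xs"
      then have "x \<in> insert a (set xs)" by simp
      then have "x \<in> insert a (set (ys1 @ ys2))" by (simp only: h1)
      moreover have "x \<noteq> a" using x h2 by auto
      ultimately show "x \<in> set (ys1 @ ys2)" by simp
    next
      fix x assume x: "x \<in> set (ys1 @ ys2)"
      then have "x \<in> insert a (set (ys1 @ ys2))" by simp
      then have "x \<in> insert a (set xs)" by (simp only: h1)
      moreover have "x \<noteq> a" using x h3 by auto
      ultimately show "x \<in> set xs" by simp
    qed
  qed
  have c1: "\<forall>b\<in>set ys1. f a * f b = f b * f a"
  proof
    fix b assume "b \<in> set ys1"
    then have "b \<in> set (a # xs)" using s by simp
    then show "f a * f b = f b * f a" by (intro Cons.prems(4)[rule_format]) simp_all
  qed
  have e1: "fprod f ys1 * f a = f a * fprod f ys1"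
    using fprod_comm[OF c1] by simp
  have e2: "fprod f (ys1 @ ys2) = fprod f xs"
  proof -
    have "distinct xs" using Cons.prems(1) by simp
    moreover have "\<forall>a\<in>set xs. \<forall>b\<in>set xs. f a * f b = f b * f a" using Cons.prems(4) by simp
    ultimately show ?thesis using Cons.IH[OF _ d(1) s] by (simp only:)
  qed
  have "fprod f ys = fprod f ys1 * (f a * fprod f ys2)" by (simp add: ys fprod_append)
  also have "\<dots> = (fprod f ys1 * f a) * fprod f ys2" by (simp add: mult.assoc)
  also have "\<dots> = (f a * fprod f ys1) * fprod f ys2" by (simp only: e1)
  also have "\<dots> = f a * fprod f (ys1 @ ys2)"
    by (simp add: fprod_append mult.assoc)
  also have "\<dots> = f a * fprod f xs" by (simp only: e2)
  finally show ?case by simp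
qed


definition allidem :: "('a \<Rightarrow> 'm::monoid_mult) \<Rightarrow> 'a set \<Rightarrow> bool" where
  "allidem f S \<longleftrightarrow> (\<forall>a\<in>S. idem (f a))"

lemma setprod_eq_fprod:
  assumes A: "adequate TYPE('m::monoid_mult)" and "finite S" "allidem (f::'a\<Rightarrow>'m) S"
    "distinct xs" "set xs = S"
  shows "setprod f S = fprod f xs"
proof -
  obtain ys where ys: "distinct ys" "set ys = S" "setprod f S = fprod f ys"
    using setprod_list[OF assms(2)] by blast
  have C: "\<forall>a\<in>set ys. \<forall>b\<in>set ys. f a * f b = f b * f a"
    using assms(3) ys(2) adq_comm[OF A] unfolding allidem_def by blast
  have "set ys = set xs" using ys(2) assms(5) by simp
  from fprod_perm[OF ys(1) assms(4) this C] show ?thesis unfolding ys(3) .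
qed

lemma setprod_empty[simp]: "setprod f {} = 1"
proof -
  have h: "(SOME xs. distinct xs \<and> set xs = {}) = []" by (rule some_equality) auto
  show ?thesis by (simp only: setprod_def h foldr_Nil id_apply)
qed

lemma setprod_insert:
  assumes A: "adequate TYPE('m::monoid_mult)" and "finite S" "allidem (f::'a\<Rightarrow>'m) (insert a S)" "a \<notin> S"
  shows "setprod f (insert a S) = f a * setprod f S"
proof -
  obtain ys where ys: "distinct ys" "set ys = S" "setprod f S = fprod f ys"
    using setprod_list[OF assms(2)] by blast
  have "setprod f (insert a S) = fprod f (a # ys)"
    using assms(4) ys(1,2) by (intro setprod_eq_fprod[OF A]) (auto simp: assms(2,3))
  thus ?thesis using ys by simp
qed

lemma setprod_reindex:
  assumes A: "adequate TYPE('m::monoid_mult)" and "finite S" "inj_on g S" "allidem (h::'b\<Rightarrow>'m) (g ` S)"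
  shows "setprod h (g ` S) = setprod (h \<circ> g) S"
proof -
  obtain ys where ys: "distinct ys" "set ys = S" "setprod (h \<circ> g) S = fprod (h \<circ> g) ys"
    using setprod_list[OF assms(2)] by blast
  have "setprod h (g ` S) = fprod h (map g ys)"
    using assms(3) ys(1,2) by (intro setprod_eq_fprod[OF A]) (auto simp: assms(2,4) distinct_map)
  also have "\<dots> = fprod (h \<circ> g) ys" by (induction ys) auto
  finally show ?thesis using ys by simp
qed

lemma setprod_cong:
  assumes "finite S" "\<And>a. a \<in> S \<Longrightarrow> f a = g a"
  shows "setprod f S = setprod g S"
proof -
  have "\<exists>xs. distinct xs \<and> set xs = S" using finite_distinct_list assms(1) by blast
  then have "distinct (SOME xs. distinct xs \<and> set xs = S) \<and> set (SOME xs. distinct xs \<and> set xs = S) = S" by (rule someI_ex)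
  then have "set (SOME xs. distinct xs \<and> set xs = S) = S" by blast
  thus ?thesis unfolding setprod_def using assms(2) by (intro foldr_cong) auto
qed

lemma setprod_le:
  assumes "finite S" "\<And>a. a \<in> S \<Longrightarrow> e * f a = e"
  shows "e * setprod f S = e"
proof -
  obtain ys where ys: "distinct ys" "set ys = S" "setprod f S = fprod f ys"
    using setprod_list[OF assms(1)] by blast
  have "\<forall>a\<in>set ys. e * f a = e" using ys assms by auto
  hence "e * fprod f ys = e"
  proof (induction ys)
    case (Cons a ys)
    then have "e * f a = e" "e * fprod f ys = e" by auto
    then show ?case by (simp add: mult.assoc[symmetric])
  qed simp
  thus ?thesis using ys by simp
qed

lemma setprod_idem:
  assumes A: "adequate TYPE('m::monoid_mult)" and "finite S" "allidem (f::'a\<Rightarrow>'m) S"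
  shows "idem (setprod f S)"
proof -
  obtain ys where ys: "distinct ys" "set ys = S" "setprod f S = fprod f ys"
    using setprod_list[OF assms(2)] by blast
  have "\<forall>a\<in>set ys. idem (f a)" using ys assms(3) by (auto simp: allidem_def)
  hence "idem (fprod f ys)"
  proof (induction ys)
    case Nil then show ?case by (simp add: idem_def)
  next
    case (Cons a ys) then show ?case using idem_mult[OF A] by simp
  qed
  thus ?thesis using ys by simp
qed




lemma tau_idem:
  assumes A: "adequate TYPE('m::monoid_mult)" and fin: "finite (edges X)"
  shows "idem (tau_aux n (chi::'s\<Rightarrow>'m) X v F)"
proof (cases n)
  case 0 then show ?thesis by (simp add: idem_def)
next
  case (Suc k)
  have f1: "finite {e \<in> edges X. src X e = v \<and> e \<notin> F}" using fin by simp
  have f2: "finite {e \<in> edges X. tgt X e = v \<and> e \<notin> F}" using fin by simp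
  show ?thesis unfolding Suc tau_aux.simps
    by (intro idem_mult[OF A] setprod_idem[OF A] f1 f2)
       (auto simp: allidem_def dplus_idem[OF A] dstar_idem[OF A])
qed

lemma tau_inc:
  assumes "\<And>e. e \<in> edges X \<Longrightarrow> src X e = v \<or> tgt X e = v \<Longrightarrow> (e \<in> F \<longleftrightarrow> e \<in> G)"
  shows "tau_aux n chi X v F = tau_aux n chi X v G"
proof (cases n)
  case 0 then show ?thesis by simp
next
  case (Suc k)
  have "{e \<in> edges X. src X e = v \<and> e \<notin> F} = {e \<in> edges X. src X e = v \<and> e \<notin> G}"
       "{e \<in> edges X. tgt X e = v \<and> e \<notin> F} = {e \<in> edges X. tgt X e = v \<and> e \<notin> G}"
    using assms by blast+
  then show ?thesis unfolding Suc tau_aux.simps by simp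
qed

lemma idem_rot3:
  assumes A: "adequate TYPE('m::monoid_mult)" and "idem (a::'m)" "idem b" "idem c"
  shows "(a * b) * c = (b * c) * a" "b * (a * c) = (b * c) * a"
proof -
  have ab: "a * b = b * a" "a * c = c * a" using adq_comm[OF A] assms by blast+
  show "(a * b) * c = (b * c) * a" by (simp add: ab mult.assoc)
  show "b * (a * c) = (b * c) * a" by (simp add: ab mult.assoc)
qed

lemma tau_split_out:
  assumes A: "adequate TYPE('m::monoid_mult)" and fin: "finite (edges X)"
    and e: "e \<in> edges X" "src X e = v" "tgt X e \<noteq> v" "e \<notin> F"
  shows "tau_aux (Suc n) (chi::'s\<Rightarrow>'m) X v F = tau_aux (Suc n) chi X v (insert e F) *
           dplus (chi (lab X e) * tau_aux n chi X (tgt X e) {e})"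
proof -
  define f where "f = (\<lambda>e. dplus (chi (lab X e) * tau_aux n chi X (tgt X e) {e}))"
  define g where "g = (\<lambda>e. dstar (tau_aux n chi X (src X e) {e} * chi (lab X e)))"
  define S where "S = {e' \<in> edges X. src X e' = v \<and> e' \<notin> insert e F}"
  have S1: "{e' \<in> edges X. src X e' = v \<and> e' \<notin> F} = insert e S" using e unfolding S_def by auto
  have S2: "{e' \<in> edges X. tgt X e' = v \<and> e' \<notin> F} = {e' \<in> edges X. tgt X e' = v \<and> e' \<notin> insert e F}"
    using e by auto
  have finS: "finite S" using fin unfolding S_def by simp
  have ai: "allidem f (insert e S)" by (simp add: allidem_def f_def dplus_idem[OF A])
  have "setprod f (insert e S) = f e * setprod f S"
    by (rule setprod_insert[OF A finS ai]) (simp add: S_def)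
  moreover have "idem (f e)" by (simp add: f_def dplus_idem[OF A])
  moreover have "idem (setprod f S)" using setprod_idem[OF A finS] ai by (simp add: allidem_def)
  moreover have "idem (setprod g {e' \<in> edges X. tgt X e' = v \<and> e' \<notin> insert e F})"
    by (rule setprod_idem[OF A]) (auto simp: fin allidem_def g_def dstar_idem[OF A])
  ultimately show ?thesis
    unfolding tau_aux.simps S1 S2 f_def[symmetric] g_def[symmetric] S_def[symmetric]
    using idem_rot3(1)[OF A] by (simp add: f_def)
qed

lemma tau_split_in:
  assumes A: "adequate TYPE('m::monoid_mult)" and fin: "finite (edges X)"
    and e: "e \<in> edges X" "tgt X e = v" "src X e \<noteq> v" "e \<notin> F"
  shows "tau_aux (Suc n) (chi::'s\<Rightarrow>'m) X v F = tau_aux (Suc n) chi X v (insert e F) *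
           dstar (tau_aux n chi X (src X e) {e} * chi (lab X e))"
proof -
  define f where "f = (\<lambda>e. dplus (chi (lab X e) * tau_aux n chi X (tgt X e) {e}))"
  define g where "g = (\<lambda>e. dstar (tau_aux n chi X (src X e) {e} * chi (lab X e)))"
  define S where "S = {e' \<in> edges X. tgt X e' = v \<and> e' \<notin> insert e F}"
  have S1: "{e' \<in> edges X. tgt X e' = v \<and> e' \<notin> F} = insert e S" using e unfolding S_def by auto
  have S2: "{e' \<in> edges X. src X e' = v \<and> e' \<notin> F} = {e' \<in> edges X. src X e' = v \<and> e' \<notin> insert e F}"
    using e by auto
  have finS: "finite S" using fin unfolding S_def by simp
  have ai: "allidem g (insert e S)" by (simp add: allidem_def g_def dstar_idem[OF A])
  have "setprod g (insert e S) = g e * setprod g S"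
    by (rule setprod_insert[OF A finS ai]) (simp add: S_def)
  moreover have "idem (g e)" by (simp add: g_def dstar_idem[OF A])
  moreover have "idem (setprod g S)" using setprod_idem[OF A finS] ai by (simp add: allidem_def)
  moreover have "idem (setprod f {e' \<in> edges X. src X e' = v \<and> e' \<notin> insert e F})"
    by (rule setprod_idem[OF A]) (auto simp: fin allidem_def f_def dplus_idem[OF A])
  ultimately show ?thesis
    unfolding tau_aux.simps S1 S2 f_def[symmetric] g_def[symmetric] S_def[symmetric]
    using idem_rot3(2)[OF A] by (simp add: g_def)
qed




definition forest :: "('v, 'e, 's) dtree \<Rightarrow> bool" where
  "forest X \<longleftrightarrow> finite (edges X) \<and>
     (\<forall>e \<in> edges X. (src X e, tgt X e) \<notin> (uadj X (edges X - {e}))\<^sup>*)"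

lemma uadj_mono: "F \<subseteq> G \<Longrightarrow> uadj X F \<subseteq> uadj X G"
  unfolding uadj_def by blast

lemma uadj_rtr_mono: "F \<subseteq> G \<Longrightarrow> (a, b) \<in> (uadj X F)\<^sup>* \<Longrightarrow> (a, b) \<in> (uadj X G)\<^sup>*"
  using rtrancl_mono[OF uadj_mono] by blast

lemma uadj_sym: "(a, b) \<in> uadj X F \<Longrightarrow> (b, a) \<in> uadj X F"
  unfolding uadj_def by blast

lemma uadj_rtr_sym: "(a, b) \<in> (uadj X F)\<^sup>* \<Longrightarrow> (b, a) \<in> (uadj X F)\<^sup>*"
proof (induction rule: rtrancl_induct)
  case base then show ?case by simp
next
  case (step y z)
  show ?case by (rule converse_rtrancl_into_rtrancl[OF uadj_sym[OF step(2)] step(3)])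
qed

lemma uadj_edge1: "e \<in> F \<Longrightarrow> (src X e, tgt X e) \<in> uadj X F"
  unfolding uadj_def by blast
lemma uadj_edge2: "e \<in> F \<Longrightarrow> (tgt X e, src X e) \<in> uadj X F"
  unfolding uadj_def by blast

lemma forest_bridge: "forest X \<Longrightarrow> e \<in> edges X \<Longrightarrow> (src X e, tgt X e) \<notin> (uadj X (edges X - {e}))\<^sup>*"
  unfolding forest_def by blast

lemma forest_bridge2: "forest X \<Longrightarrow> e \<in> edges X \<Longrightarrow> (tgt X e, src X e) \<notin> (uadj X (edges X - {e}))\<^sup>*"
  using forest_bridge[of X e] uadj_rtr_sym[of "tgt X e" "src X e" X "edges X - {e}"] by blast

lemma forest_noloop: "forest X \<Longrightarrow> e \<in> edges X \<Longrightarrow> src X e \<noteq> tgt X e"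
proof
  assume "forest X" "e \<in> edges X" "src X e = tgt X e"
  then show False using forest_bridge[of X e] by simp
qed

lemma dpath_append: "dpath X u (xs @ ys) w \<longleftrightarrow> (\<exists>m. dpath X u xs m \<and> dpath X m ys w)"
  by (induction xs arbitrary: u) auto

lemma dpath_edges: "dpath X u es w \<Longrightarrow> set es \<subseteq> edges X"
  by (induction es arbitrary: u) auto

lemma dpath_rtr: "dpath X u es w \<Longrightarrow> (u, w) \<in> (uadj X (set es))\<^sup>*"
proof (induction es arbitrary: u)
  case Nil then show ?case by simp
next
  case (Cons e es)
  then have "(tgt X e, w) \<in> (uadj X (set es))\<^sup>*" by simp
  then have "(tgt X e, w) \<in> (uadj X (set (e # es)))\<^sup>*"
    by (rule uadj_rtr_mono[rotated]) auto
  moreover have "(u, tgt X e) \<in> uadj X (set (e # es))" using Cons.prems uadj_edge1[of e "set (e#es)" X] by simp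
  ultimately show ?case by (meson converse_rtrancl_into_rtrancl)
qed

lemma nocyc:
  assumes "forest X" "g \<in> edges X" "dpath X (tgt X g) es (src X g)" "g \<notin> set es"
  shows False
proof -
  have "(tgt X g, src X g) \<in> (uadj X (set es))\<^sup>*" using dpath_rtr[OF assms(3)] .
  moreover have "set es \<subseteq> edges X - {g}" using dpath_edges[OF assms(3)] assms(4) by blast
  ultimately have "(tgt X g, src X g) \<in> (uadj X (edges X - {g}))\<^sup>*" by (rule uadj_rtr_mono[rotated])
  thus False using forest_bridge2[OF assms(1,2)] by blast
qed

lemma dpath_distinct: "forest X \<Longrightarrow> dpath X a es b \<Longrightarrow> distinct es"
proof (induction es arbitrary: a)
  case Nil then show ?case by simp
next
  case (Cons e es)
  have d: "distinct es" using Cons by auto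
  have "e \<notin> set es"
  proof
    assume "e \<in> set es"
    then obtain p q where pq: "es = p @ e # q" "e \<notin> set p" by (meson split_list_first)
    have "dpath X (tgt X e) es b" using Cons.prems by simp
    then have "dpath X (tgt X e) p (src X e)" unfolding pq dpath_append by auto
    moreover have "e \<in> edges X" using Cons.prems by simp
    ultimately show False using nocyc[OF Cons.prems(1)] pq(2) by blast
  qed
  then show ?case using d by simp
qed

lemma closed_walk: "forest X \<Longrightarrow> dpath X a es a \<Longrightarrow> es = []"
proof (cases es)
  case (Cons g r)
  assume f: "forest X" and p: "dpath X a es a"
  have "distinct es" using dpath_distinct[OF f p] .
  then have "g \<notin> set r" using Cons by simp
  moreover have "dpath X (tgt X g) r (src X g)" "g \<in> edges X" using p Cons by auto
  ultimately show ?thesis using nocyc[OF f] by blast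
qed simp

lemma dpath_unique: "forest X \<Longrightarrow> dpath X a s b \<Longrightarrow> dpath X a t b \<Longrightarrow> s = t"
proof (induction s arbitrary: a t)
  case Nil
  then have "a = b" by simp
  then have "dpath X a t a" using Nil.prems(3) by simp
  then show ?case using closed_walk[OF Nil.prems(1)] by (metis)
next
  case (Cons e s)
  show ?case
  proof (cases t)
    case Nil
    then have "a = b" using Cons.prems by simp
    then have "dpath X a (e # s) a" using Cons.prems(2) by simp
    then show ?thesis using closed_walk[OF Cons.prems(1)] by blast
  next
    case Cons2: (Cons g t')
    show ?thesis
    proof (cases "e = g")
      case True
      have "dpath X (tgt X e) s b" "dpath X (tgt X e) t' b" using Cons.prems Cons2 True by auto
      then have "s = t'" by (rule Cons.IH[OF Cons.prems(1)])
      then show ?thesis using Cons2 True by simp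
    next
      case False
      have pe: "e \<in> edges X" "src X e = a" "dpath X (tgt X e) s b" using Cons.prems by auto
      have pg: "g \<in> edges X" "src X g = a" "dpath X (tgt X g) t' b" using Cons.prems Cons2 by auto
      have de: "e \<notin> set s" using dpath_distinct[OF Cons.prems(1,2)] by simp
      have dg: "g \<notin> set t'" using dpath_distinct[OF Cons.prems(1,3)] Cons2 by simp
      have et: "e \<notin> set t'"
      proof
        assume "e \<in> set t'"
        then obtain p q where pq: "t' = p @ e # q" by (meson split_list)
        then have "dpath X (tgt X g) p (src X g)" using pg pe unfolding pq dpath_append by auto
        moreover have "g \<notin> set p" using dg pq by simp
        ultimately show False using nocyc[OF Cons.prems(1) pg(1)] by blast
      qed
      let ?E = "edges X - {e}"
      have s1: "set s \<subseteq> ?E" using dpath_edges[OF pe(3)] de by blast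
      have s2: "set t' \<subseteq> ?E" using dpath_edges[OF pg(3)] et by blast
      have "(tgt X e, b) \<in> (uadj X ?E)\<^sup>*"
        by (rule uadj_rtr_mono[OF s1 dpath_rtr[OF pe(3)]])
      moreover have "(b, tgt X g) \<in> (uadj X ?E)\<^sup>*"
        by (rule uadj_rtr_mono[OF s2 uadj_rtr_sym[OF dpath_rtr[OF pg(3)]]])
      moreover have "(tgt X g, src X e) \<in> uadj X ?E"
        using uadj_edge2[of g ?E X] pg pe False by simp
      ultimately have "(tgt X e, src X e) \<in> (uadj X ?E)\<^sup>*"
        using pg(2) pe(2) by (metis rtrancl_trans rtrancl_into_rtrancl)
      then show ?thesis using forest_bridge2[OF Cons.prems(1) pe(1)] by blast
    qed
  qed
qed

definition ucomp :: "('v, 'e, 's) dtree \<Rightarrow> 'v \<Rightarrow> 'e set \<Rightarrow> 'v set" where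
  "ucomp X v F = {u. (v, u) \<in> (uadj X (edges X - F))\<^sup>*}"

definition Rset :: "('v, 'e, 's) dtree \<Rightarrow> 'v \<Rightarrow> 'e set \<Rightarrow> 'e set" where
  "Rset X v F = {f \<in> edges X - F. src X f \<in> ucomp X v F}"

lemma child_Rset:
  assumes fo: "forest X" and inc: "\<forall>f\<in>F. src X f = v \<or> tgt X f = v"
    and e: "e \<in> edges X" "e \<notin> F"
    and w: "(src X e = v \<and> w = tgt X e) \<or> (tgt X e = v \<and> w = src X e)"
  shows "Rset X w {e} \<subseteq> Rset X v F - {e}" "e \<in> Rset X v F"
proof -
  let ?E = "edges X - {e}"
  have nwv: "(w, v) \<notin> (uadj X ?E)\<^sup>*"
    using w forest_bridge[OF fo e(1)] forest_bridge2[OF fo e(1)] by blast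
  have avoid: "(w, u) \<in> (uadj X (edges X - {e} - F))\<^sup>*" if "(w, u) \<in> (uadj X ?E)\<^sup>*" for u
    using that
  proof (induction rule: rtrancl_induct)
    case base then show ?case by simp
  next
    case (step y z)
    from step(2) obtain g where g: "g \<in> ?E" "(src X g = y \<and> tgt X g = z) \<or> (src X g = z \<and> tgt X g = y)"
      unfolding uadj_def by blast
    show ?case
    proof (cases "g \<in> F")
      case True
      then have "src X g = v \<or> tgt X g = v" using inc by blast
      moreover have "(src X g, tgt X g) \<in> uadj X ?E" "(tgt X g, src X g) \<in> uadj X ?E"
        using g(1) uadj_edge1 uadj_edge2 by metis+
      ultimately have "(y, v) \<in> (uadj X ?E)\<^sup>*" using g(2) by auto
      then have "(w, v) \<in> (uadj X ?E)\<^sup>*" using step(1) by (meson rtrancl_trans)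
      then show ?thesis using nwv by blast
    next
      case False
      then have "(y, z) \<in> uadj X (edges X - {e} - F)" using g unfolding uadj_def by blast
      then show ?thesis using step(3) by (meson rtrancl_into_rtrancl)
    qed
  qed
  have vw: "(v, w) \<in> uadj X (edges X - F)"
    using w e uadj_edge1[of e "edges X - F" X] uadj_edge2[of e "edges X - F" X] by auto
  show "Rset X w {e} \<subseteq> Rset X v F - {e}"
  proof
    fix f assume "f \<in> Rset X w {e}"
    then have f: "f \<in> edges X" "f \<noteq> e" "(w, src X f) \<in> (uadj X ?E)\<^sup>*"
      unfolding Rset_def ucomp_def by auto
    have fF: "f \<notin> F"
    proof
      assume "f \<in> F"
      then have "src X f = v \<or> tgt X f = v" using inc by blast
      moreover have "(src X f, tgt X f) \<in> uadj X ?E" using f uadj_edge1[of f ?E X] by simp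
      ultimately have "(w, v) \<in> (uadj X ?E)\<^sup>*" using f(3) by (metis rtrancl_into_rtrancl)
      then show False using nwv by blast
    qed
    have "(w, src X f) \<in> (uadj X (edges X - F))\<^sup>*"
      by (rule uadj_rtr_mono[OF _ avoid[OF f(3)]]) blast
    then have "(v, src X f) \<in> (uadj X (edges X - F))\<^sup>*" using vw by (meson converse_rtrancl_into_rtrancl)
    then show "f \<in> Rset X v F - {e}" using f fF unfolding Rset_def ucomp_def by auto
  qed
  have "(v, src X e) \<in> (uadj X (edges X - F))\<^sup>*"
    using w e uadj_edge2[of e "edges X - F" X] by auto
  then show "e \<in> Rset X v F" using e unfolding Rset_def ucomp_def by auto
qed

lemma Rset_fin: "forest X \<Longrightarrow> finite (Rset X v F)"
  unfolding forest_def Rset_def by auto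

lemma stab:
  assumes fo: "forest X"
  shows "\<forall>m v F. (\<forall>f\<in>F. src X f = v \<or> tgt X f = v) \<longrightarrow> card (Rset X v F) \<le> n \<longrightarrow>
          card (Rset X v F) \<le> m \<longrightarrow> tau_aux n chi X v F = tau_aux m chi X v F"
proof (induction n)
  have empty: "tau_aux m chi X v F = 1" if inc: "\<forall>f\<in>F. src X f = v \<or> tgt X f = v"
     and c: "Rset X v F = {}" for m v F
  proof (cases m)
    case (Suc k)
    have o1: "{e \<in> edges X. src X e = v \<and> e \<notin> F} = {}"
    proof -
      { fix e assume e: "e \<in> edges X" "src X e = v" "e \<notin> F"
        then have "e \<in> Rset X v F" using child_Rset(2)[OF fo inc, of e "tgt X e"] by simp
        then have False using c by simp }
      then show ?thesis by blast
    qed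
    have o2: "{e \<in> edges X. tgt X e = v \<and> e \<notin> F} = {}"
    proof -
      { fix e assume e: "e \<in> edges X" "tgt X e = v" "e \<notin> F"
        then have "e \<in> Rset X v F" using child_Rset(2)[OF fo inc, of e "src X e"] by simp
        then have False using c by simp }
      then show ?thesis by blast
    qed
    show ?thesis unfolding Suc tau_aux.simps o1 o2 by simp
  qed simp
  {
    case 0
    show ?case
    proof (intro allI impI)
      fix m v F assume inc: "\<forall>f\<in>F. src X f = v \<or> tgt X f = v" and "card (Rset X v F) \<le> 0"
      then have "Rset X v F = {}" using Rset_fin[OF fo] by simp
      then show "tau_aux 0 chi X v F = tau_aux m chi X v F" using empty[OF inc] by simp
    qed
  next
    case (Suc n)
    show ?case
    proof (intro allI impI)
      fix m v F assume inc: "\<forall>f\<in>F. src X f = v \<or> tgt X f = v"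
        and c1: "card (Rset X v F) \<le> Suc n" and c2: "card (Rset X v F) \<le> m"
      show "tau_aux (Suc n) chi X v F = tau_aux m chi X v F"
      proof (cases m)
        case 0
        then have "Rset X v F = {}" using c2 Rset_fin[OF fo] by simp
        then show ?thesis using empty[OF inc] 0 by simp
      next
        case (Suc k)
        have ch: "tau_aux n chi X w {e} = tau_aux k chi X w {e}"
          if e: "e \<in> edges X" "e \<notin> F" and w: "(src X e = v \<and> w = tgt X e) \<or> (tgt X e = v \<and> w = src X e)"
          for e w
        proof -
          have sub: "Rset X w {e} \<subset> Rset X v F" using child_Rset[OF fo inc e w] by blast
          then have "card (Rset X w {e}) < card (Rset X v F)" using Rset_fin[OF fo] psubset_card_mono by blast
          then have "card (Rset X w {e}) \<le> n" "card (Rset X w {e}) \<le> k" using c1 c2 Suc by auto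
          moreover have "\<forall>f\<in>{e}. src X f = w \<or> tgt X f = w" using w by auto
          ultimately show ?thesis using Suc.IH by blast
        qed
        have fin: "finite (edges X)" using fo unfolding forest_def by blast
        show ?thesis unfolding Suc tau_aux.simps
        proof (intro arg_cong2[where f="(*)"] setprod_cong)
          show "finite {e \<in> edges X. src X e = v \<and> e \<notin> F}" using fin by simp
          show "finite {e \<in> edges X. tgt X e = v \<and> e \<notin> F}" using fin by simp
        next
          fix e assume "e \<in> {e \<in> edges X. src X e = v \<and> e \<notin> F}"
          then show "dplus (chi (lab X e) * tau_aux n chi X (tgt X e) {e}) =
                     dplus (chi (lab X e) * tau_aux k chi X (tgt X e) {e})"
            using ch[of e "tgt X e"] by simp
        next
          fix e assume "e \<in> {e \<in> edges X. tgt X e = v \<and> e \<notin> F}"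
          then show "dstar (tau_aux n chi X (src X e) {e} * chi (lab X e)) =
                     dstar (tau_aux k chi X (src X e) {e} * chi (lab X e))"
            using ch[of e "src X e"] by simp
        qed
      qed
    qed
  }
qed

lemma stab_edge:
  assumes fo: "forest X" and e: "e \<in> edges X" and w: "w = tgt X e \<or> w = src X e"
    and n: "card (edges X) \<le> Suc n"
  shows "tau_aux n chi X w {e} = tau_aux (card (edges X)) chi X w {e}"
proof -
  have fin: "finite (edges X)" using fo unfolding forest_def by blast
  have "Rset X w {e} \<subseteq> edges X - {e}" unfolding Rset_def by blast
  then have "card (Rset X w {e}) \<le> card (edges X - {e})" using fin by (simp add: card_mono)
  also have "\<dots> = card (edges X) - 1" using e fin by simp
  finally have c: "card (Rset X w {e}) \<le> n" "card (Rset X w {e}) \<le> card (edges X)" using n by auto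
  have "\<forall>f\<in>{e}. src X f = w \<or> tgt X f = w" using w by auto
  then show ?thesis using stab[OF fo] c by blast
qed




definition full :: "('s \<Rightarrow> 'm::monoid_mult) \<Rightarrow> ('v, 'e, 's) dtree \<Rightarrow> 'v \<Rightarrow> 'm" where
  "full chi X v = tau_aux (card (edges X)) chi X v {}"

lemma forest_fin: "forest X \<Longrightarrow> finite (edges X)"
  unfolding forest_def by blast

lemma fs_out:
  assumes A: "adequate TYPE('m::monoid_mult)" and fo: "forest X"
    and e: "e \<in> edges X" "e \<notin> F"
  shows "tau_aux (card (edges X)) (chi::'s\<Rightarrow>'m) X (src X e) F =
         tau_aux (card (edges X)) chi X (src X e) (insert e F) *
         dplus (chi (lab X e) * tau_aux (card (edges X)) chi X (tgt X e) {e})"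
proof -
  have fin: "finite (edges X)" using forest_fin[OF fo] .
  obtain n where n: "card (edges X) = Suc n" using e(1) fin by (metis card_0_eq empty_iff not0_implies_Suc)
  have "tau_aux n chi X (tgt X e) {e} = tau_aux (card (edges X)) chi X (tgt X e) {e}"
    by (rule stab_edge[OF fo e(1)]) (auto simp: n)
  moreover have "tau_aux (Suc n) chi X (src X e) F = tau_aux (Suc n) chi X (src X e) (insert e F) *
           dplus (chi (lab X e) * tau_aux n chi X (tgt X e) {e})"
    by (rule tau_split_out[OF A fin e(1) refl _ e(2)]) (use forest_noloop[OF fo e(1)] in auto)
  ultimately show ?thesis unfolding n by simp
qed

lemma fs_in:
  assumes A: "adequate TYPE('m::monoid_mult)" and fo: "forest X"
    and e: "e \<in> edges X" "e \<notin> F"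
  shows "tau_aux (card (edges X)) (chi::'s\<Rightarrow>'m) X (tgt X e) F =
         tau_aux (card (edges X)) chi X (tgt X e) (insert e F) *
         dstar (tau_aux (card (edges X)) chi X (src X e) {e} * chi (lab X e))"
proof -
  have fin: "finite (edges X)" using forest_fin[OF fo] .
  obtain n where n: "card (edges X) = Suc n" using e(1) fin by (metis card_0_eq empty_iff not0_implies_Suc)
  have "tau_aux n chi X (src X e) {e} = tau_aux (card (edges X)) chi X (src X e) {e}"
    by (rule stab_edge[OF fo e(1)]) (auto simp: n)
  moreover have "tau_aux (Suc n) chi X (tgt X e) F = tau_aux (Suc n) chi X (tgt X e) (insert e F) *
           dstar (tau_aux n chi X (src X e) {e} * chi (lab X e))"
    by (rule tau_split_in[OF A fin e(1) refl _ e(2)]) (use forest_noloop[OF fo e(1)] in auto)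
  ultimately show ?thesis unfolding n by simp
qed

lemma AL1:
  assumes A: "adequate TYPE('m::monoid_mult)" and iA: "idem (a::'m)" and iB: "idem b"
  shows "(b * dplus (c * a)) * dplus (c * (a * dstar (b * c))) = b * dplus (c * a)"
proof -
  let ?L = "dstar (b * c)" let ?P = "dplus (c * a)" let ?Q = "dplus (c * (a * ?L))"
  have iL: "idem ?L" using dstar_idem[OF A] .
  have iP: "idem ?P" using dplus_idem[OF A] .
  have iQ: "idem ?Q" using dplus_idem[OF A] .
  have aL: "a * ?L = ?L * a" using adq_comm[OF A iA iL] .
  have "b * (c * (a * ?L)) = (b * c * ?L) * a" by (simp add: aL mult.assoc)
  also have "b * c * ?L = b * c" using dstar_right[OF A, of "b*c"] .
  finally have e1: "b * (c * (a * ?L)) = b * (c * a)" by (simp add: mult.assoc)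
  have "b * ?Q = dplus (b * (c * (a * ?L)))" using dplus_idem_mult[OF A iB] by simp
  also have "\<dots> = dplus (b * (c * a))" by (simp only: e1)
  also have "\<dots> = b * ?P" using dplus_idem_mult[OF A iB] by simp
  finally have bQ: "b * ?Q = b * ?P" .
  have bP: "b * ?P = ?P * b" using adq_comm[OF A iB iP] .
  have "(b * ?P) * ?Q = ?P * (b * ?Q)" by (simp add: bP mult.assoc)
  also have "\<dots> = ?P * (b * ?P)" by (simp only: bQ)
  also have "\<dots> = b * (?P * ?P)" by (simp only: mult.assoc[symmetric] bP[symmetric])
  also have "\<dots> = b * ?P" using iP by (simp add: idem_def)
  finally show ?thesis .
qed

lemma AL2:
  assumes A: "adequate TYPE('m::monoid_mult)" and iA: "idem (a::'m)" and iB: "idem b"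
  shows "(a * dstar (b * c)) * dstar ((b * dplus (c * a)) * c) = a * dstar (b * c)"
proof -
  let ?L = "dstar (b * c)" let ?P = "dplus (c * a)" let ?D = "dstar ((b * ?P) * c)"
  have iL: "idem ?L" using dstar_idem[OF A] .
  have iD: "idem ?D" using dstar_idem[OF A] .
  have "?D * a = dstar (((b * ?P) * c) * a)" using dstar_idem_mult[OF A iA] by simp
  also have "((b * ?P) * c) * a = b * (?P * (c * a))" by (simp add: mult.assoc)
  also have "?P * (c * a) = c * a" using dplus_left[OF A] .
  also have "dstar (b * (c * a)) = ?L * a" using dstar_idem_mult[OF A iA, of "b*c"] by (simp add: mult.assoc)
  finally have Da: "?D * a = ?L * a" .
  have aL: "a * ?L = ?L * a" using adq_comm[OF A iA iL] .
  have aD: "a * ?D = ?D * a" using adq_comm[OF A iA iD] .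
  have "(a * ?L) * ?D = ?L * (a * ?D)" by (simp add: aL mult.assoc)
  also have "\<dots> = ?L * (?L * a)" by (simp only: aD Da)
  also have "\<dots> = ?L * a" using iL by (simp add: idem_def mult.assoc[symmetric])
  finally show ?thesis using aL by simp
qed

lemma edge_lemma:
  assumes A: "adequate TYPE('m::monoid_mult)" and fo: "forest Z" and e: "e \<in> edges Z"
  shows "full (chi::'s\<Rightarrow>'m) Z (src Z e) * dplus (chi (lab Z e) * full chi Z (tgt Z e)) = full chi Z (src Z e)"
    "full chi Z (tgt Z e) * dstar (full chi Z (src Z e) * chi (lab Z e)) = full chi Z (tgt Z e)"
proof -
  let ?N = "card (edges Z)"
  let ?a = "tau_aux ?N chi Z (tgt Z e) {e}" let ?b = "tau_aux ?N chi Z (src Z e) {e}"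
  have fin: "finite (edges Z)" using forest_fin[OF fo] .
  have ia: "idem ?a" "idem ?b" using tau_idem[OF A fin] by blast+
  have fs: "full chi Z (src Z e) = ?b * dplus (chi (lab Z e) * ?a)"
    unfolding full_def using fs_out[OF A fo e, of "{}"] by simp
  have ft: "full chi Z (tgt Z e) = ?a * dstar (?b * chi (lab Z e))"
    unfolding full_def using fs_in[OF A fo e, of "{}"] by simp
  show "full chi Z (src Z e) * dplus (chi (lab Z e) * full chi Z (tgt Z e)) = full chi Z (src Z e)"
    unfolding fs ft by (rule AL1[OF A ia])
  show "full chi Z (tgt Z e) * dstar (full chi Z (src Z e) * chi (lab Z e)) = full chi Z (tgt Z e)"
    unfolding fs ft by (rule AL2[OF A ia])
qed

lemma mono_plus:
  assumes A: "adequate TYPE('m::monoid_mult)" and "idem (p::'m)" "idem t" "p * t = p"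
  shows "dplus (c * p) * dplus (c * t) = dplus (c * p)"
proof -
  have "p = t * p" using assms adq_comm[OF A] by metis
  then have "c * p = (c * t) * p" by (simp add: mult.assoc)
  then have "dplus (c * p) = dplus (c * t) * dplus (c * p)"
    using dplus_mono[OF A, of "c*t" p] by simp
  also have "\<dots> = dplus (c * p) * dplus (c * t)"
    using adq_comm[OF A dplus_idem[OF A] dplus_idem[OF A]] by blast
  finally show ?thesis by simp
qed

lemma mono_star:
  assumes A: "adequate TYPE('m::monoid_mult)" and "p * t = (p::'m)"
  shows "dstar (p * c) * dstar (t * c) = dstar (p * c)"
proof -
  have "p * c = p * (t * c)" using assms(2) by (simp add: mult.assoc[symmetric])
  then show ?thesis using dstar_mono[OF A, of p "t*c"] by simp
qed

definition emb :: "('v, 'e, 's) dtree \<Rightarrow> ('w, 'f, 's) dtree \<Rightarrow> ('v \<Rightarrow> 'w) \<Rightarrow> ('e \<Rightarrow> 'f) \<Rightarrow> bool" where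
  "emb X Z gV gE \<longleftrightarrow> (\<forall>a\<in>edges X. gE a \<in> edges Z \<and> src Z (gE a) = gV (src X a) \<and>
      tgt Z (gE a) = gV (tgt X a) \<and> lab Z (gE a) = lab X a)"

lemma lemmaM:
  assumes A: "adequate TYPE('m::monoid_mult)" and fo: "forest Z" and fin: "finite (edges X)"
    and g: "emb X Z gV gE"
  shows "\<forall>x F. full (chi::'s\<Rightarrow>'m) Z (gV x) * tau_aux n chi X x F = full chi Z (gV x)"
proof (induction n)
  case 0 then show ?case by simp
next
  case (Suc n)
  have finZ: "finite (edges Z)" using forest_fin[OF fo] .
  show ?case
  proof (intro allI)
    fix x F
    let ?phi = "full chi Z (gV x)"
    have iphi: "idem (full chi Z v)" for v unfolding full_def using tau_idem[OF A finZ] .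
    have P: "?phi * setprod (\<lambda>e. dplus (chi (lab X e) * tau_aux n chi X (tgt X e) {e}))
                {e \<in> edges X. src X e = x \<and> e \<notin> F} = ?phi"
    proof (rule setprod_le)
      show "finite {e \<in> edges X. src X e = x \<and> e \<notin> F}" using fin by simp
    next
      fix a assume a: "a \<in> {e \<in> edges X. src X e = x \<and> e \<notin> F}"
      let ?t = "tau_aux n chi X (tgt X a) {a}" let ?psi = "full chi Z (gV (tgt X a))"
      have ga: "gE a \<in> edges Z" "src Z (gE a) = gV x" "tgt Z (gE a) = gV (tgt X a)" "lab Z (gE a) = lab X a"
        using g a unfolding emb_def by auto
      have E: "?phi * dplus (chi (lab X a) * ?psi) = ?phi"
        using edge_lemma(1)[OF A fo ga(1), of chi] ga by simp
      have IH: "?psi * ?t = ?psi" using Suc.IH by blast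
      have M: "dplus (chi (lab X a) * ?psi) * dplus (chi (lab X a) * ?t) = dplus (chi (lab X a) * ?psi)"
        by (rule mono_plus[OF A iphi tau_idem[OF A fin] IH])
      have "?phi * dplus (chi (lab X a) * ?t) = ?phi * dplus (chi (lab X a) * ?psi) * dplus (chi (lab X a) * ?t)"
        using E by simp
      also have "\<dots> = ?phi * (dplus (chi (lab X a) * ?psi) * dplus (chi (lab X a) * ?t))"
        by (rule mult.assoc)
      also have "\<dots> = ?phi" by (simp only: M E)
      finally show "?phi * dplus (chi (lab X a) * ?t) = ?phi" .
    qed
    have Q: "?phi * setprod (\<lambda>e. dstar (tau_aux n chi X (src X e) {e} * chi (lab X e)))
                {e \<in> edges X. tgt X e = x \<and> e \<notin> F} = ?phi"
    proof (rule setprod_le)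
      show "finite {e \<in> edges X. tgt X e = x \<and> e \<notin> F}" using fin by simp
    next
      fix a assume a: "a \<in> {e \<in> edges X. tgt X e = x \<and> e \<notin> F}"
      let ?t = "tau_aux n chi X (src X a) {a}" let ?psi = "full chi Z (gV (src X a))"
      have ga: "gE a \<in> edges Z" "tgt Z (gE a) = gV x" "src Z (gE a) = gV (src X a)" "lab Z (gE a) = lab X a"
        using g a unfolding emb_def by auto
      have E: "?phi * dstar (?psi * chi (lab X a)) = ?phi"
        using edge_lemma(2)[OF A fo ga(1), of chi] ga by simp
      have IH: "?psi * ?t = ?psi" using Suc.IH by blast
      have M: "dstar (?psi * chi (lab X a)) * dstar (?t * chi (lab X a)) = dstar (?psi * chi (lab X a))"
        by (rule mono_star[OF A IH])
      have "?phi * dstar (?t * chi (lab X a)) = ?phi * dstar (?psi * chi (lab X a)) * dstar (?t * chi (lab X a))"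
        using E by simp
      also have "\<dots> = ?phi * (dstar (?psi * chi (lab X a)) * dstar (?t * chi (lab X a)))"
        by (rule mult.assoc)
      also have "\<dots> = ?phi" by (simp only: M E)
      finally show "?phi * dstar (?t * chi (lab X a)) = ?phi" .
    qed
    show "?phi * tau_aux (Suc n) chi X x F = ?phi"
      unfolding tau_aux.simps using P Q by (simp add: mult.assoc[symmetric])
  qed
qed




lemma inc_mid:
  assumes fo: "forest X" and p: "dpath X a (pre @ e # es) b"
    and f: "f \<in> edges X" "src X f = tgt X e \<or> tgt X f = tgt X e"
  shows "f \<in> set (pre @ e # es) \<longleftrightarrow> f \<in> insert e (set (take 1 es))"
proof
  assume "f \<in> insert e (set (take 1 es))"
  then show "f \<in> set (pre @ e # es)" by (cases es) auto
next
  assume fin: "f \<in> set (pre @ e # es)"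
  obtain m where m: "dpath X a pre m" "dpath X m (e # es) b" using p unfolding dpath_append by blast
  have pe: "src X e = m" "dpath X (tgt X e) es b" "e \<in> edges X" using m(2) by auto
  show "f \<in> insert e (set (take 1 es))"
  proof (cases "f = e")
    case True then show ?thesis by simp
  next
    case False
    then have "f \<in> set pre \<or> f \<in> set es" using fin by auto
    then show ?thesis
    proof
      assume "f \<in> set es"
      then obtain p q where pq: "es = p @ f # q" by (meson split_list)
      then have dp: "dpath X (tgt X e) p (src X f)" using pe(2) unfolding pq dpath_append by auto
      show ?thesis using f(2)
      proof
        assume "src X f = tgt X e"
        then have "p = []" using closed_walk[OF fo] dp by metis
        then show ?thesis using pq by simp
      next
        assume t: "tgt X f = tgt X e"
        have "dpath X (tgt X e) (p @ [f]) (tgt X f)" using dp f(1) unfolding dpath_append by auto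
        then have "p @ [f] = []" using closed_walk[OF fo] t by metis
        then show ?thesis by simp
      qed
    next
      assume "f \<in> set pre"
      then obtain p q where pq: "pre = p @ f # q" by (meson split_list)
      have "dpath X a (p @ f # q) m" using m(1) pq by simp
      then obtain m' where "dpath X a p m'" "dpath X m' (f # q) m" unfolding dpath_append by blast
      then have dq: "dpath X (tgt X f) q m" "src X f = m'" by auto
      have dq2: "dpath X (tgt X f) (q @ [e]) (tgt X e)" using dq(1) pe unfolding dpath_append by auto
      show ?thesis using f(2)
      proof
        assume s: "src X f = tgt X e"
        have "dpath X (src X f) (f # q @ [e]) (tgt X e)" using dq2 f(1) by simp
        then have "f # q @ [e] = []" using closed_walk[OF fo] s by metis
        then show ?thesis by simp
      next
        assume t: "tgt X f = tgt X e"
        then have "q @ [e] = []" using closed_walk[OF fo] dq2 by metis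
        then show ?thesis by simp
      qed
    qed
  qed
qed

lemma inc_st:
  assumes fo: "forest X" and p: "dpath X a T b"
    and f: "f \<in> edges X" "src X f = a \<or> tgt X f = a"
  shows "f \<in> set T \<longleftrightarrow> f \<in> set (take 1 T)"
proof
  assume "f \<in> set (take 1 T)" then show "f \<in> set T" by (cases T) auto
next
  assume "f \<in> set T"
  then obtain p q where pq: "T = p @ f # q" by (meson split_list)
  then have dp: "dpath X a p (src X f)" using p unfolding pq dpath_append by auto
  show "f \<in> set (take 1 T)" using f(2)
  proof
    assume "src X f = a"
    then have "p = []" using closed_walk[OF fo] dp by metis
    then show ?thesis using pq by simp
  next
    assume t: "tgt X f = a"
    have "dpath X a (p @ [f]) (tgt X f)" using dp f(1) unfolding dpath_append by auto
    then have "p @ [f] = []" using closed_walk[OF fo] t by metis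
    then show ?thesis by simp
  qed
qed

lemma ALR:
  assumes A: "adequate TYPE('m::monoid_mult)" and il: "idem (l::'m)" and ir: "idem r" and ix: "idem x"
    and xr: "x * r = r" and Wl: "W * l = W"
  shows "(W * c * x) * (x * dstar (l * c)) = W * c * x"
    "W * (l * dplus (c * r)) * (c * (r * dstar (l * c)) * F) = (W * c * x) * (r * dstar (l * c)) * F"
proof -
  let ?L = "dstar (l * c)"
  have iL: "idem ?L" using dstar_idem[OF A] .
  have xL: "x * ?L = ?L * x" using adq_comm[OF A ix iL] .
  have Wc: "W * c * ?L = W * c"
  proof -
    have "W * c * ?L = W * (l * c * ?L)" using Wl by (metis mult.assoc)
    also have "l * c * ?L = l * c" using dstar_right[OF A] .
    finally show ?thesis using Wl by (metis mult.assoc)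
  qed
  have "(W * c * x) * (x * ?L) = W * c * (x * x) * ?L" by (simp add: mult.assoc)
  also have "\<dots> = W * c * (x * ?L)" using ix by (simp add: idem_def mult.assoc)
  also have "\<dots> = (W * c * ?L) * x" by (simp add: xL mult.assoc)
  also have "\<dots> = W * c * x" by (simp only: Wc)
  finally show "(W * c * x) * (x * ?L) = W * c * x" .
  have "W * (l * dplus (c * r)) * (c * (r * ?L) * F) = (W * l) * (dplus (c * r) * (c * r)) * ?L * F"
    by (simp add: mult.assoc)
  also have "\<dots> = W * (c * r) * ?L * F" by (simp only: Wl dplus_left[OF A])
  also have "\<dots> = W * c * (x * r) * ?L * F" by (simp only: xr mult.assoc)
  also have "\<dots> = (W * c * x) * (r * ?L) * F" by (simp add: mult.assoc)
  finally show "W * (l * dplus (c * r)) * (c * (r * ?L) * F) = (W * c * x) * (r * ?L) * F" .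
qed

definition fstep :: "('s \<Rightarrow> 'm::monoid_mult) \<Rightarrow> ('v, 'e, 's) dtree \<Rightarrow> ('v \<Rightarrow> 'm) \<Rightarrow> 'e list \<Rightarrow> 'm" where
  "fstep chi X h es = foldr (\<lambda>e acc. chi (lab X e) * h (tgt X e) * acc) es 1"

lemma fstep_simps[simp]: "fstep chi X h [] = 1"
  "fstep chi X h (e # es) = chi (lab X e) * h (tgt X e) * fstep chi X h es"
  by (simp_all add: fstep_def)

lemma claimC:
  assumes A: "adequate TYPE('m::monoid_mult)" and fo: "forest X"
    and T: "dpath X (st X) T (en X)"
  shows "\<forall>pre u W. T = pre @ es \<longrightarrow> dpath X (st X) pre u \<longrightarrow> dpath X u es (en X) \<longrightarrow>
     W * tau_aux (card (edges X)) chi X u (set (take 1 es)) = W \<longrightarrow>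
     W * full chi X u * fstep chi X (full chi X) es =
     W * fstep (chi::'s \<Rightarrow>'m) X (\<lambda>v. tau_aux (card (edges X)) chi X v (set T)) es"
proof (induction es)
  case Nil
  show ?case by (simp add: full_def)
next
  case (Cons e es)
  show ?case
  proof (intro allI impI)
    fix pre u W
    assume TT: "T = pre @ e # es" and dp: "dpath X (st X) pre u" and de: "dpath X u (e # es) (en X)"
      and Wl: "W * tau_aux (card (edges X)) chi X u (set (take 1 (e # es))) = W"
    let ?N = "card (edges X)"
    let ?x = "\<lambda>v. tau_aux ?N chi X v (set T)"
    let ?w = "tgt X e" let ?c = "chi (lab X e)"
    let ?l = "tau_aux ?N chi X u {e}" let ?r = "tau_aux ?N chi X ?w {e}"
    let ?L = "dstar (?l * ?c)"
    have fin: "finite (edges X)" using forest_fin[OF fo] .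
    have e: "e \<in> edges X" "src X e = u" "dpath X ?w es (en X)" using de by auto
    have Wl': "W * ?l = W" using Wl by simp
    have pT: "dpath X (st X) (pre @ e # es) (en X)" using T TT by simp
    have dT: "distinct T" using dpath_distinct[OF fo T] .
    have i: "f = e \<longrightarrow> True" for f by simp
    have fi: "full chi X u = ?l * dplus (?c * ?r)"
      unfolding full_def using fs_out[OF A fo e(1), of "{}" chi] e(2) by simp
    have fii: "full chi X ?w = ?r * ?L"
      unfolding full_def using fs_in[OF A fo e(1), of "{}" chi] e(2) by simp
    have incw: "f \<in> set T \<longleftrightarrow> f \<in> insert e (set (take 1 es))"
      if "f \<in> edges X" "src X f = ?w \<or> tgt X f = ?w" for f
      using inc_mid[OF fo pT that] TT by simp
    have iii: "tau_aux ?N chi X ?w (set (take 1 es)) = ?x ?w * ?L"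
      and iv: "?x ?w * ?r = ?r"
    proof -
      have ir: "idem ?r" using tau_idem[OF A fin] .
      show "tau_aux ?N chi X ?w (set (take 1 es)) = ?x ?w * ?L" "?x ?w * ?r = ?r"
      proof (atomize (full), cases es)
        case Nil
        have rx: "?r = ?x ?w" by (rule tau_inc) (use incw Nil in auto)
        show "tau_aux ?N chi X ?w (set (take 1 es)) = ?x ?w * ?L \<and> ?x ?w * ?r = ?r"
          using fii ir rx Nil by (simp add: full_def idem_def)
      next
        case (Cons f es')
        have f: "f \<in> edges X" "src X f = ?w" using e(3) Cons by auto
        have ef: "e \<noteq> f" using dT TT Cons by auto
        have x2: "tau_aux ?N chi X ?w {e, f} = ?x ?w" by (rule tau_inc) (use incw Cons in auto)
        have a1: "tau_aux ?N chi X ?w {f} = tau_aux ?N chi X ?w {e, f} * ?L"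
          using fs_in[OF A fo e(1), of "{f}" chi] ef e(2) by (simp add: insert_commute)
        have a2: "?r = tau_aux ?N chi X ?w {e, f} * dplus (chi (lab X f) * tau_aux ?N chi X (tgt X f) {f})"
          using fs_out[OF A fo f(1), of "{e}" chi] ef f(2) by (simp add: insert_commute)
        have ix: "idem (?x ?w)" using tau_idem[OF A fin] .
        show "tau_aux ?N chi X ?w (set (take 1 es)) = ?x ?w * ?L \<and> ?x ?w * ?r = ?r"
          using a1 a2 x2 ix Cons by (simp add: idem_def mult.assoc[symmetric])
      qed
    qed
    note alg = ALR[OF A tau_idem[OF A fin] tau_idem[OF A fin] tau_idem[OF A fin] iv Wl']
    have W'l: "(W * ?c * ?x ?w) * tau_aux ?N chi X ?w (set (take 1 es)) = W * ?c * ?x ?w"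
      unfolding iii using alg(1) .
    have IH: "(W * ?c * ?x ?w) * full chi X ?w * fstep chi X (full chi X) es =
              (W * ?c * ?x ?w) * fstep chi X ?x es"
      using Cons.IH[rule_format, of "pre @ [e]" ?w "W * ?c * ?x ?w"] TT dp e W'l
      unfolding dpath_append by auto
    have "W * full chi X u * fstep chi X (full chi X) (e # es) =
          W * (?l * dplus (?c * ?r)) * (?c * (?r * ?L) * fstep chi X (full chi X) es)"
      by (simp add: fi fii mult.assoc)
    also have "\<dots> = (W * ?c * ?x ?w) * (?r * ?L) * fstep chi X (full chi X) es"
      by (rule alg(2))
    also have "\<dots> = (W * ?c * ?x ?w) * fstep chi X ?x es" using IH fii by simp
    also have "\<dots> = W * fstep chi X ?x (e # es)" by (simp add: mult.assoc)
    finally show "W * full chi X u * fstep chi X (full chi X) (e # es) = W * fstep chi X ?x (e # es)" .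
  qed
qed

lemma lemmaR:
  assumes A: "adequate TYPE('m::monoid_mult)" and fo: "forest X"
    and T: "dpath X (st X) T (en X)"
  shows "tau_aux (card (edges X)) (chi::'s\<Rightarrow>'m) X (st X) (set T) *
           fstep chi X (\<lambda>v. tau_aux (card (edges X)) chi X v (set T)) T =
         full chi X (st X) * fstep chi X (full chi X) T"
proof -
  let ?N = "card (edges X)"
  let ?x = "tau_aux ?N chi X (st X) (set T)"
  have fin: "finite (edges X)" using forest_fin[OF fo] .
  have ix: "idem ?x" using tau_idem[OF A fin] .
  have l: "tau_aux ?N chi X (st X) (set (take 1 T)) = ?x"
    by (rule tau_inc) (use inc_st[OF fo T] in auto)
  have xf: "?x * full chi X (st X) = full chi X (st X)"
  proof (cases T)
    case Nil then show ?thesis using ix by (simp add: full_def idem_def)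
  next
    case (Cons e T')
    have e: "e \<in> edges X" "src X e = st X" using T Cons by auto
    have "full chi X (st X) = tau_aux ?N chi X (st X) {e} * dplus (chi (lab X e) * tau_aux ?N chi X (tgt X e) {e})"
      unfolding full_def using fs_out[OF A fo e(1), of "{}" chi] e(2) by simp
    moreover have "tau_aux ?N chi X (st X) {e} = ?x" using l Cons by simp
    ultimately show ?thesis using ix by (simp add: idem_def mult.assoc[symmetric])
  qed
  have "?x * full chi X (st X) * fstep chi X (full chi X) T = ?x * fstep chi X (\<lambda>v. tau_aux ?N chi X v (set T)) T"
  proof (rule claimC[OF A fo T, where es=T and chi=chi, rule_format])
    show "T = [] @ T" by simp
    show "dpath X (st X) [] (st X)" by simp
    show "dpath X (st X) T (en X)" using T .
    show "?x * tau_aux ?N chi X (st X) (set (take 1 T)) = ?x" using l ix by (simp add: idem_def)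
  qed
  then show ?thesis using xf by simp
qed




lemma rho_eq: "trunk X = T \<Longrightarrow> rho chi X = tau_aux (card (edges X)) chi X (st X) (set T) *
      fstep chi X (\<lambda>v. tau_aux (card (edges X)) chi X v (set T)) T"
  by (simp add: rho_def Let_def fstep_def)

lemma tree_forest: "is_tree X \<Longrightarrow> forest X"
  unfolding is_tree_def forest_def by blast

lemma dpath_morph:
  assumes "\<forall>e\<in>edges X. gE e \<in> edges Y \<and> src Y (gE e) = gV (src X e) \<and> tgt Y (gE e) = gV (tgt X e)"
  shows "dpath X u es w \<Longrightarrow> dpath Y (gV u) (map gE es) (gV w)"
  using assms by (induction es arbitrary: u) auto

lemma map_self: "map f xs = xs \<Longrightarrow> x \<in> set xs \<Longrightarrow> f x = x"
  by (induction xs) auto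

lemma tau_iso:
  assumes A: "adequate TYPE('m::monoid_mult)" and fin: "finite (edges R)"
    and ivg: "inj_on gV (verts R)" and bg: "bij_betw gE (edges R) (edges Y)"
    and H: "\<forall>e\<in>edges R. src R e \<in> verts R \<and> tgt R e \<in> verts R \<and> src Y (gE e) = gV (src R e) \<and>
             tgt Y (gE e) = gV (tgt R e) \<and> lab Y (gE e) = lab R e"
  shows "\<forall>v F. v \<in> verts R \<longrightarrow> F \<subseteq> edges R \<longrightarrow>
           tau_aux n (chi::'s\<Rightarrow>'m) Y (gV v) (gE ` F) = tau_aux n chi R v F"
proof (induction n)
  case 0 then show ?case by simp
next
  case (Suc n)
  have ie: "inj_on gE (edges R)" and im: "gE ` edges R = edges Y" using bg unfolding bij_betw_def by auto
  show ?case
  proof (intro allI impI)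
    fix v F assume v: "v \<in> verts R" and F: "F \<subseteq> edges R"
    have gF: "gE e \<notin> gE ` F \<longleftrightarrow> e \<notin> F" if "e \<in> edges R" for e
      using inj_on_image_mem_iff[OF ie that F] by simp
    have so: "{e' \<in> edges Y. src Y e' = gV v \<and> e' \<notin> gE ` F} = gE ` {e \<in> edges R. src R e = v \<and> e \<notin> F}"
    proof (intro equalityI subsetI)
      fix e' assume e'': "e' \<in> {e' \<in> edges Y. src Y e' = gV v \<and> e' \<notin> gE ` F}"
      then have "e' \<in> gE ` edges R" using im by simp
      then obtain e where e0: "e \<in> edges R" "e' = gE e" by blast
      then have e: "e \<in> edges R" "e' = gE e" "gV (src R e) = gV v" "gE e \<notin> gE ` F"
        using e'' H by auto
      then have "src R e = v" using ivg v H unfolding inj_on_def by blast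
      then show "e' \<in> gE ` {e \<in> edges R. src R e = v \<and> e \<notin> F}" using e gF by auto
    next
      fix e' assume "e' \<in> gE ` {e \<in> edges R. src R e = v \<and> e \<notin> F}"
      then obtain e where e: "e \<in> edges R" "e' = gE e" "src R e = v" "e \<notin> F" by auto
      then show "e' \<in> {e' \<in> edges Y. src Y e' = gV v \<and> e' \<notin> gE ` F}" using im H gF by auto
    qed
    have si: "{e' \<in> edges Y. tgt Y e' = gV v \<and> e' \<notin> gE ` F} = gE ` {e \<in> edges R. tgt R e = v \<and> e \<notin> F}"
    proof (intro equalityI subsetI)
      fix e' assume e'': "e' \<in> {e' \<in> edges Y. tgt Y e' = gV v \<and> e' \<notin> gE ` F}"
      then have "e' \<in> gE ` edges R" using im by simp
      then obtain e where e0: "e \<in> edges R" "e' = gE e" by blast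
      then have e: "e \<in> edges R" "e' = gE e" "gV (tgt R e) = gV v" "gE e \<notin> gE ` F"
        using e'' H by auto
      then have "tgt R e = v" using ivg v H unfolding inj_on_def by blast
      then show "e' \<in> gE ` {e \<in> edges R. tgt R e = v \<and> e \<notin> F}" using e gF by auto
    next
      fix e' assume "e' \<in> gE ` {e \<in> edges R. tgt R e = v \<and> e \<notin> F}"
      then obtain e where e: "e \<in> edges R" "e' = gE e" "tgt R e = v" "e \<notin> F" by auto
      then show "e' \<in> {e' \<in> edges Y. tgt Y e' = gV v \<and> e' \<notin> gE ` F}" using im H gF by auto
    qed
    have f1: "finite {e \<in> edges R. src R e = v \<and> e \<notin> F}" using fin by simp
    have f2: "finite {e \<in> edges R. tgt R e = v \<and> e \<notin> F}" using fin by simp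
    have i1: "inj_on gE {e \<in> edges R. src R e = v \<and> e \<notin> F}" using ie by (rule inj_on_subset) blast
    have i2: "inj_on gE {e \<in> edges R. tgt R e = v \<and> e \<notin> F}" using ie by (rule inj_on_subset) blast
    have P: "setprod (\<lambda>e. dplus (chi (lab Y e) * tau_aux n chi Y (tgt Y e) {e}))
               (gE ` {e \<in> edges R. src R e = v \<and> e \<notin> F}) =
             setprod (\<lambda>e. dplus (chi (lab R e) * tau_aux n chi R (tgt R e) {e}))
               {e \<in> edges R. src R e = v \<and> e \<notin> F}"
    proof -
      have "setprod (\<lambda>e. dplus (chi (lab Y e) * tau_aux n chi Y (tgt Y e) {e}))
               (gE ` {e \<in> edges R. src R e = v \<and> e \<notin> F}) =
            setprod ((\<lambda>e. dplus (chi (lab Y e) * tau_aux n chi Y (tgt Y e) {e})) \<circ> gE)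
               {e \<in> edges R. src R e = v \<and> e \<notin> F}"
        by (rule setprod_reindex[OF A f1 i1]) (simp add: allidem_def dplus_idem[OF A])
      also have "\<dots> = setprod (\<lambda>e. dplus (chi (lab R e) * tau_aux n chi R (tgt R e) {e}))
               {e \<in> edges R. src R e = v \<and> e \<notin> F}"
      proof (rule setprod_cong[OF f1])
        fix e assume e: "e \<in> {e \<in> edges R. src R e = v \<and> e \<notin> F}"
        have "tgt R e \<in> verts R" "{e} \<subseteq> edges R" using e H by auto
        then have "tau_aux n chi Y (gV (tgt R e)) (gE ` {e}) = tau_aux n chi R (tgt R e) {e}"
          using Suc.IH by blast
        then show "((\<lambda>e. dplus (chi (lab Y e) * tau_aux n chi Y (tgt Y e) {e})) \<circ> gE) e =
                   dplus (chi (lab R e) * tau_aux n chi R (tgt R e) {e})"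
          using e H by simp
      qed
      finally show ?thesis .
    qed
    have Q: "setprod (\<lambda>e. dstar (tau_aux n chi Y (src Y e) {e} * chi (lab Y e)))
               (gE ` {e \<in> edges R. tgt R e = v \<and> e \<notin> F}) =
             setprod (\<lambda>e. dstar (tau_aux n chi R (src R e) {e} * chi (lab R e)))
               {e \<in> edges R. tgt R e = v \<and> e \<notin> F}"
    proof -
      have "setprod (\<lambda>e. dstar (tau_aux n chi Y (src Y e) {e} * chi (lab Y e)))
               (gE ` {e \<in> edges R. tgt R e = v \<and> e \<notin> F}) =
            setprod ((\<lambda>e. dstar (tau_aux n chi Y (src Y e) {e} * chi (lab Y e))) \<circ> gE)
               {e \<in> edges R. tgt R e = v \<and> e \<notin> F}"
        by (rule setprod_reindex[OF A f2 i2]) (simp add: allidem_def dstar_idem[OF A])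
      also have "\<dots> = setprod (\<lambda>e. dstar (tau_aux n chi R (src R e) {e} * chi (lab R e)))
               {e \<in> edges R. tgt R e = v \<and> e \<notin> F}"
      proof (rule setprod_cong[OF f2])
        fix e assume e: "e \<in> {e \<in> edges R. tgt R e = v \<and> e \<notin> F}"
        have "src R e \<in> verts R" "{e} \<subseteq> edges R" using e H by auto
        then have "tau_aux n chi Y (gV (src R e)) (gE ` {e}) = tau_aux n chi R (src R e) {e}"
          using Suc.IH by blast
        then show "((\<lambda>e. dstar (tau_aux n chi Y (src Y e) {e} * chi (lab Y e))) \<circ> gE) e =
                   dstar (tau_aux n chi R (src R e) {e} * chi (lab R e))"
          using e H by simp
      qed
      finally show ?thesis .
    qed
    show "tau_aux (Suc n) chi Y (gV v) (gE ` F) = tau_aux (Suc n) chi R v F"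
      unfolding tau_aux.simps so si P Q ..
  qed
qed




theorem corollary5p13:
  fixes chi :: "'s \<Rightarrow> 'm::monoid_mult"
    and X :: "('v, 'e, 's) dtree"
    and fV :: "'v \<Rightarrow> 'v" and fE :: "'e \<Rightarrow> 'e"
    and Y :: "('w, 'f, 's) dtree"
    and gV :: "'v \<Rightarrow> 'w" and gE :: "'e \<Rightarrow> 'f"
  assumes "adequate TYPE('m)"
    and "is_tree X"
    and "retraction X fV fE"
    and "pruned (retract_img X fV fE)"
    and "isomorphism (retract_img X fV fE) Y gV gE"
  shows "rho chi X = rho chi Y"
proof -
  note A = assms(1)
  define R where "R = retract_img X fV fE"
  have tr: "is_tree X" by fact
  have fo: "forest X" using tree_forest[OF tr] .
  have finX: "finite (edges X)" using tr unfolding is_tree_def by blast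
  have endp: "\<forall>e\<in>edges X. src X e \<in> verts X \<and> tgt X e \<in> verts X" "st X \<in> verts X" "en X \<in> verts X"
    using tr unfolding is_tree_def by blast+
  have mf: "morphism X X fV fE" using assms(3) unfolding retraction_def by blast
  have mfE: "\<forall>e\<in>edges X. fE e \<in> edges X \<and> src X (fE e) = fV (src X e) \<and> tgt X (fE e) = fV (tgt X e)
              \<and> lab X (fE e) = lab X e" "fV (st X) = st X" "fV (en X) = en X"
    using mf unfolding morphism_def by blast+
  have Rs[simp]: "verts R = fV ` verts X" "edges R = fE ` edges X" "src R = src X" "tgt R = tgt X"
    "lab R = lab X" "st R = st X" "en R = en X"
    unfolding R_def retract_img_def by simp_all
  have ERX: "edges R \<subseteq> edges X" using mfE(1) by auto
  have uR: "uadj R F = uadj X F" for F unfolding uadj_def by simp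
  have foR: "forest R"
    unfolding forest_def
  proof (intro conjI ballI)
    show "finite (edges R)" using finX by simp
  next
    fix e assume e: "e \<in> edges R"
    then have eX: "e \<in> edges X" using ERX by blast
    show "(src R e, tgt R e) \<notin> (uadj R (edges R - {e}))\<^sup>*"
    proof
      assume "(src R e, tgt R e) \<in> (uadj R (edges R - {e}))\<^sup>*"
      then have "(src X e, tgt X e) \<in> (uadj X (edges R - {e}))\<^sup>*" by (simp add: uR)
      then have "(src X e, tgt X e) \<in> (uadj X (edges X - {e}))\<^sup>*"
        by (rule uadj_rtr_mono[rotated]) (use ERX in blast)
      then show False using forest_bridge[OF fo eX] by blast
    qed
  qed
  define T where "T = trunk X"
  have "\<exists>es. is_trunk X es" using tr unfolding is_tree_def by blast
  then have isT: "is_trunk X T" unfolding T_def trunk_def by (rule someI_ex)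
  have dT: "dpath X (st X) T (en X)" using isT unfolding is_trunk_def by blast
  have distT: "distinct T" using isT unfolding is_trunk_def by blast
  have "dpath X (fV (st X)) (map fE T) (fV (en X))"
    by (rule dpath_morph[OF _ dT]) (use mfE(1) in blast)
  then have "dpath X (st X) (map fE T) (en X)" using mfE(2,3) by simp
  then have mT: "map fE T = T" using dpath_unique[OF fo _ dT] by blast
  have fixT: "fE e = e" if "e \<in> set T" for e using map_self[OF mT that] .
  have TR: "set T \<subseteq> edges R"
  proof
    fix e assume e: "e \<in> set T"
    then have "e \<in> edges X" using dpath_edges[OF dT] by blast
    then show "e \<in> edges R" using fixT[OF e] by (simp add: image_iff) (metis)
  qed
  have dpR: "dpath R u es w \<longleftrightarrow> dpath X u es w \<and> set es \<subseteq> edges R" for u es w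
    by (induction es arbitrary: u) (auto simp: ERX[THEN subsetD])
  have dTR: "dpath R (st R) T (en R)" using dT TR dpR by simp
  have trR: "trunk R = T"
    unfolding trunk_def
  proof (rule some_equality)
    show "is_trunk R T" unfolding is_trunk_def using dTR distT by simp
  next
    fix s assume "is_trunk R s"
    then have "dpath X (st X) s (en X)" unfolding is_trunk_def using dpR by simp
    then show "s = T" using dpath_unique[OF fo _ dT] by blast
  qed
  have rX: "rho chi X = full chi X (st X) * fstep chi X (full chi X) T"
    using rho_eq[of X T chi] lemmaR[OF A fo dT, of chi] by (simp add: T_def)
  have rR: "rho chi R = full chi R (st X) * fstep chi R (full chi R) T"
    using rho_eq[OF trR, of chi] lemmaR[OF A foR dTR, of chi] by simp
  have finR: "finite (edges R)" using forest_fin[OF foR] .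
  have fulleq: "full chi R v = full chi X v" if v: "fV v = v" for v
  proof -
    have e1: "emb X R fV fE" unfolding emb_def using mfE(1) by auto
    have e2: "emb R X id id" unfolding emb_def using ERX by auto
    have "full chi R (fV v) * tau_aux (card (edges X)) chi X v {} = full chi R (fV v)"
      using lemmaM[OF A foR finX e1, where n="card (edges X)" and chi=chi] by blast
    then have a: "full chi R v * full chi X v = full chi R v" using v by (simp add: full_def)
    have "full chi X (id v) * tau_aux (card (edges R)) chi R v {} = full chi X (id v)"
      using lemmaM[OF A fo finR e2, where n="card (edges R)" and chi=chi] by blast
    then have b: "full chi X v * full chi R v = full chi X v" by (simp add: full_def)
    have "idem (full chi R v)" "idem (full chi X v)" unfolding full_def
      using tau_idem[OF A finR] tau_idem[OF A finX] by blast+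
    then show ?thesis using a b adq_comm[OF A] by metis
  qed
  have fsteq: "fstep chi R (full chi R) T = fstep chi X (full chi X) T"
  proof -
    have "\<forall>e\<in>set T. full chi R (tgt X e) = full chi X (tgt X e)"
    proof
      fix e assume e: "e \<in> set T"
      then have "e \<in> edges X" using dpath_edges[OF dT] by blast
      then have "fV (tgt X e) = tgt X e" using mfE(1) fixT[OF e] by metis
      then show "full chi R (tgt X e) = full chi X (tgt X e)" by (rule fulleq)
    qed
    then show ?thesis unfolding fstep_def by (intro foldr_cong) auto
  qed
  have rXR: "rho chi X = rho chi R" using rX rR fsteq fulleq[OF mfE(2)] by simp
  have iso: "morphism R Y gV gE" "bij_betw gV (verts R) (verts Y)" "bij_betw gE (edges R) (edges Y)"
    using assms(5) unfolding isomorphism_def R_def by blast+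
  have mg: "\<forall>e\<in>edges R. gE e \<in> edges Y \<and> src Y (gE e) = gV (src R e) \<and> tgt Y (gE e) = gV (tgt R e)
              \<and> lab Y (gE e) = lab R e" "gV (st R) = st Y" "gV (en R) = en Y"
    using iso(1) unfolding morphism_def by blast+
  have ivg: "inj_on gV (verts R)" using iso(2) unfolding bij_betw_def by blast
  have ieg: "inj_on gE (edges R)" "gE ` edges R = edges Y" using iso(3) unfolding bij_betw_def by blast+
  have vR: "src R e \<in> verts R \<and> tgt R e \<in> verts R" if "e \<in> edges R" for e
  proof -
    have "e \<in> fE ` edges X" using that by simp
    then obtain e0 where e0: "e0 \<in> edges X" "e = fE e0" by blast
    then show ?thesis using mfE(1) endp(1) by auto
  qed
  have stR: "st X \<in> verts R" "en X \<in> verts R" using endp mfE(2,3) by (metis Rs(1) image_eqI)+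
  have H: "\<forall>e\<in>edges R. src R e \<in> verts R \<and> tgt R e \<in> verts R \<and> src Y (gE e) = gV (src R e) \<and>
             tgt Y (gE e) = gV (tgt R e) \<and> lab Y (gE e) = lab R e"
    using vR mg(1) by blast
  have TI: "tau_aux n chi Y (gV v) (gE ` F) = tau_aux n chi R v F"
    if "v \<in> verts R" "F \<subseteq> edges R" for n v F
    using tau_iso[OF A finR ivg iso(3) H, of n chi] that by blast
  have trY: "trunk Y = map gE T"
    unfolding trunk_def
  proof (rule some_equality)
    have "dpath Y (gV (st R)) (map gE T) (gV (en R))"
      by (rule dpath_morph[OF _ dTR]) (use mg(1) in blast)
    then have "dpath Y (st Y) (map gE T) (en Y)" using mg(2,3) by simp
    moreover have "distinct (map gE T)" using distT ieg(1) TR by (simp add: distinct_map inj_on_subset)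
    ultimately show "is_trunk Y (map gE T)" unfolding is_trunk_def by simp
  next
    fix s assume s: "is_trunk Y s"
    let ?h = "inv_into (edges R) gE"
    have bk: "\<forall>u. u \<in> verts R \<longrightarrow> dpath Y (gV u) ss (gV z) \<longrightarrow> dpath R u (map ?h ss) z"
      if z: "z \<in> verts R" for ss z
    proof (induction ss)
      case Nil then show ?case using ivg z unfolding inj_on_def by auto
    next
      case (Cons e' ss)
      show ?case
      proof (intro allI impI)
        fix u assume u: "u \<in> verts R" and p: "dpath Y (gV u) (e' # ss) (gV z)"
        then have e': "e' \<in> edges Y" "src Y e' = gV u" "dpath Y (tgt Y e') ss (gV z)" by auto
        then have he: "?h e' \<in> edges R" "gE (?h e') = e'" using ieg(2)
          by (metis inv_into_into, metis f_inv_into_f)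
        have "gV (src R (?h e')) = gV u" using mg(1) he e' by metis
        then have s1: "src R (?h e') = u" using ivg vR[OF he(1)] u unfolding inj_on_def by blast
        have "tgt Y e' = gV (tgt R (?h e'))" using mg(1) he by metis
        then have "dpath R (tgt R (?h e')) (map ?h ss) z" using Cons.IH vR[OF he(1)] e'(3) by auto
        then show "dpath R u (map ?h (e' # ss)) z" using he s1 by simp
      qed
    qed
    have "dpath Y (gV (st X)) s (gV (en X))" using s mg(2,3) unfolding is_trunk_def by simp
    then have "dpath R (st X) (map ?h s) (en X)" using bk[OF stR(2)] stR(1) by blast
    then have "dpath X (st X) (map ?h s) (en X)" using dpR by blast
    then have hs: "map ?h s = T" using dpath_unique[OF fo _ dT] by blast
    have "dpath Y (st Y) s (en Y)" using s unfolding is_trunk_def by blast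
    then have "set s \<subseteq> edges Y" by (rule dpath_edges)
    then have "map gE (map ?h s) = s" using ieg(2) by (induction s) (auto simp: f_inv_into_f)
    then show "s = map gE T" using hs by (metis)
  qed
  have cardY: "card (edges Y) = card (edges R)" using bij_betw_same_card[OF iso(3)] by simp
  have rY: "rho chi Y = tau_aux (card (edges R)) chi R (st X) (set T) *
      fstep chi R (\<lambda>v. tau_aux (card (edges R)) chi R v (set T)) T"
  proof -
    have "rho chi Y = tau_aux (card (edges Y)) chi Y (st Y) (set (map gE T)) *
      fstep chi Y (\<lambda>v. tau_aux (card (edges Y)) chi Y v (set (map gE T))) (map gE T)"
      by (rule rho_eq[OF trY])
    also have "tau_aux (card (edges Y)) chi Y (st Y) (set (map gE T)) = tau_aux (card (edges R)) chi R (st X) (set T)"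
      using TI[OF stR(1) TR, of "card (edges R)"] mg(2) cardY by simp
    also have "fstep chi Y (\<lambda>v. tau_aux (card (edges Y)) chi Y v (set (map gE T))) (map gE T) =
               fstep chi R (\<lambda>v. tau_aux (card (edges R)) chi R v (set T)) T"
      unfolding fstep_def foldr_map
    proof (intro foldr_cong refl)
      fix e acc assume e: "e \<in> set T"
      then have eR: "e \<in> edges R" using TR by blast
      have "tau_aux (card (edges R)) chi Y (gV (tgt R e)) (gE ` set T) = tau_aux (card (edges R)) chi R (tgt R e) (set T)"
        using TI[OF _ TR] vR[OF eR] by blast
      moreover have "lab Y (gE e) = lab R e" "tgt Y (gE e) = gV (tgt R e)" using mg(1) eR by blast+
      ultimately show "((\<lambda>e acc. chi (lab Y e) * tau_aux (card (edges Y)) chi Y (tgt Y e) (set (map gE T)) * acc) \<circ> gE) e acc =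
            chi (lab R e) * tau_aux (card (edges R)) chi R (tgt R e) (set T) * acc"
        using cardY by (simp only: o_apply set_map)
    qed
    finally show ?thesis .
  qed
  have "rho chi R = tau_aux (card (edges R)) chi R (st X) (set T) *
      fstep chi R (\<lambda>v. tau_aux (card (edges R)) chi R v (set T)) T"
    using rho_eq[OF trR, of chi] by simp
  then have "rho chi R = rho chi Y" using rY by simp
  then show ?thesis using rXR by simp
qed


end
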